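(* For any partitions $\mu,\nu$, $$\lim_{\alpha\to\pm\infty}\frac{\hat L^{(\alpha)}_{\mu,\nu}(\alpha x)}{\alpha^{|\mu|+|\nu|}}=(x-1)^{|\mu|}(x+1)^{|\nu|},\qquad \lim_{\alpha\to\pm\infty}\frac{\hat\Omega^{(\alpha)}_{\mu,\nu}(\alpha x)}{\alpha^{|\mu|+|\nu|}}=(x-1)^{|\mu|}(x+1)^{|\nu|}.$$
   Context: For a partition $\lambda=(\lambda_1\ge\dots\ge\lambda_{\ell(\lambda)}>0)$ the degree vector has entries $n_i=\lambda_i+\ell(\lambda)-i$; $\Delta$ of a list $(y_1,\dots,y_r)$ is $\prod_{i<j}(y_j-y_i)$. Let $\hat L_n^{(\alpha)}=(-1)^nn!\,L_n^{(\alpha)}$ with $L_n^{(\alpha)}$ the classical Laguerre polynomial (so $\hat L_n^{(\alpha)}$ is monic of degree $n$). Let $n_\mu=(n_1,\dots,n_{\ell(\mu)})$ and $m_\nu=(m_1,\dots,m_{\ell(\nu)})$ be the degree vectors of $\mu$ and $\nu$. For real $\alpha$ such that $n_1,\dots,n_{\ell(\mu)},m_1-\alpha,\dots,m_{\ell(\nu)}-\alpha$ are pairwise distinct, $$\hat L^{(\alpha)}_{\mu,\nu}(x)=\frac{x^{(\ell(\mu)+\alpha)\ell(\nu)}}{\Delta(n_\mu,m_\nu-\alpha)}\mathrm{Wr}\big[\hat L^{(\alpha)}_{n_1},\dots,\hat L^{(\alpha)}_{n_{\ell(\mu)}},x^{-\alpha}\hat L^{(-\alpha)}_{m_1},\dots,x^{-\alpha}\hat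 L^{(-\alpha)}_{m_{\ell(\nu)}}\big],$$ a monic polynomial in $x$ of degree $|\mu|+|\nu|$ (extended to other $\alpha$ by continuity). For every $\alpha$, $$\hat\Omega^{(\alpha)}_{\mu,\nu}(x)=\frac{(-1)^{\sum_jm_j}}{\Delta(n_\mu)\Delta(m_\nu)}e^{-\ell(\nu)x}\,\mathrm{Wr}\big[\hat L^{(\alpha)}_{n_1}(x),\dots,\hat L^{(\alpha)}_{n_{\ell(\mu)}}(x),e^x\hat L^{(\alpha)}_{m_1}(-x),\dots,e^x\hat L^{(\alpha)}_{m_{\ell(\nu)}}(-x)\big],$$ a monic polynomial of degree $|\mu|+|\nu|$. The limits are taken for fixed $x$ as $\alpha$ tends to $+\infty$ or $-\infty$ through real values. *)

theory Defs
  imports "HOL-Analysis.Analysis" "HOL-Computational_Algebra.Polynomial"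
begin

definition is_partition :: "nat list \<Rightarrow> bool" where
  "is_partition lam \<longleftrightarrow> sorted_wrt (\<ge>) lam \<and> (\<forall>k\<in>set lam. 0 < k)"

definition psize :: "nat list \<Rightarrow> nat" where
  "psize lam = sum_list lam"

text \<open>Degree vector n_i = lam_i + l(lam) - i (1-indexed; here 0-indexed i).\<close>
definition degvec :: "nat list \<Rightarrow> nat list" where
  "degvec lam = map (\<lambda>i. lam ! i + length lam - 1 - i) [0..<length lam]"

definition vdm :: "real list \<Rightarrow> real" where
  "vdm ys = (\<Prod>j<length ys. \<Prod>i<j. (ys ! j - ys ! i))"

text \<open>Monic Laguerre polynomial (-1)^n n! L_n^(a)(x).\<close>
definition lag_hat :: "real \<Rightarrow> nat \<Rightarrow> real \<Rightarrow> real" where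
  "lag_hat a n x = (\<Sum>k\<le>n. (-1) ^ (n - k) * (fact n / fact k)
                       * ((real n + a) gchoose (n - k)) * x ^ k)"

definition wronskian :: "(real \<Rightarrow> real) list \<Rightarrow> real \<Rightarrow> real" where
  "wronskian fs x = (\<Sum>p | p permutes {..<length fs}.
      of_int (sign p) * (\<Prod>i<length fs. (deriv ^^ i) (fs ! (p i)) x))"

definition lag_generic :: "real \<Rightarrow> nat list \<Rightarrow> nat list \<Rightarrow> bool" where
  "lag_generic a mu nu \<longleftrightarrow>
     distinct (map real (degvec mu) @ map (\<lambda>m. real m - a) (degvec nu))"

definition lag_mn_generic :: "real \<Rightarrow> nat list \<Rightarrow> nat list \<Rightarrow> real poly" where
  "lag_mn_generic a mu nu = (THE p. \<forall>x>0. poly p x =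
      x powr ((real (length mu) + a) * real (length nu))
        / vdm (map real (degvec mu) @ map (\<lambda>m. real m - a) (degvec nu))
        * wronskian (map (\<lambda>n. lag_hat a n) (degvec mu)
                     @ map (\<lambda>m. \<lambda>y. y powr (- a) * lag_hat (- a) m y) (degvec nu)) x)"

definition lag_mn :: "real \<Rightarrow> nat list \<Rightarrow> nat list \<Rightarrow> real poly" where
  "lag_mn a mu nu = (if lag_generic a mu nu then lag_mn_generic a mu nu
     else Poly (map (\<lambda>i. Lim (at a) (\<lambda>b. coeff (lag_mn_generic b mu nu) i))
                   [0..<psize mu + psize nu + 1]))"

definition omega_mn :: "real \<Rightarrow> nat list \<Rightarrow> nat list \<Rightarrow> real \<Rightarrow> real" where
  "omega_mn a mu nu x =
     (-1) ^ sum_list (degvec nu) / (vdm (map real (degvec mu)) * vdm (map real (degvec nu)))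
     * exp (- real (length nu) * x)
     * wronskian (map (\<lambda>n. lag_hat a n) (degvec mu)
                  @ map (\<lambda>m. \<lambda>y. exp y * lag_hat a m (- y)) (degvec nu)) x"

end

theory Submission
  imports Defs "Jordan_Normal_Form.Determinant"
begin

definition ff :: "real \<Rightarrow> nat \<Rightarrow> real" where
  "ff e i = (\<Prod>q<i. e - real q)"

lemma ff_0[simp]: "ff e 0 = 1" by (simp add: ff_def)
lemma ff_Suc: "ff e (Suc i) = ff e i * (e - real i)" by (simp add: ff_def)
lemma ff_nat_zero: "n < i \<Longrightarrow> ff (real n) i = 0"
  unfolding ff_def by (rule prod_zero) (auto intro!: bexI[of _ n])

lemma det_transpose_form:
  "Determinant.det (mat r r f) = (\<Sum>p | p permutes {0..<r}. signof p * (\<Prod>j = 0..<r. f (p j, j)))"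
proof -
  have "Determinant.det (mat r r f) = Determinant.det (transpose_mat (mat r r f))"
    by (rule det_transpose[symmetric]) auto
  also have "\<dots> = (\<Sum>p | p permutes {0..<r}. signof p * (\<Prod>j = 0..<r. f (p j, j)))"
    unfolding det_def
    by (auto intro!: sum.cong prod.cong simp: permutes_in_image)
  finally show ?thesis .
qed

lemma det_expand:
  fixes C :: "nat \<Rightarrow> nat \<Rightarrow> 'a::comm_ring_1" and V :: "nat \<Rightarrow> nat \<Rightarrow> nat \<Rightarrow> 'a"
  assumes U: "finite U"
  shows "Determinant.det (mat r r (\<lambda>(i,j). \<Sum>u\<in>U. C j u * V j u i)) =
    (\<Sum>g\<in>PiE {0..<r} (\<lambda>_. U). (\<Prod>j = 0..<r. C j (g j)) * Determinant.det (mat r r (\<lambda>(i,j). V j (g j) i)))"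
proof -
  have "Determinant.det (mat r r (\<lambda>(i,j). \<Sum>u\<in>U. C j u * V j u i)) =
     (\<Sum>p | p permutes {0..<r}. signof p * (\<Prod>j = 0..<r. \<Sum>u\<in>U. C j u * V j u (p j)))"
    by (simp add: det_transpose_form)
  also have "\<dots> = (\<Sum>p | p permutes {0..<r}. signof p * (\<Sum>g\<in>PiE {0..<r} (\<lambda>_. U). \<Prod>j = 0..<r. C j (g j) * V j (g j) (p j)))"
    by (subst prod_sum_PiE) (auto simp: U)
  also have "\<dots> = (\<Sum>p | p permutes {0..<r}. \<Sum>g\<in>PiE {0..<r} (\<lambda>_. U). (\<Prod>j = 0..<r. C j (g j)) * (signof p * (\<Prod>j = 0..<r. V j (g j) (p j))))"
    by (simp add: sum_distrib_left prod.distrib algebra_simps)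
  also have "\<dots> = (\<Sum>g\<in>PiE {0..<r} (\<lambda>_. U). \<Sum>p | p permutes {0..<r}. (\<Prod>j = 0..<r. C j (g j)) * (signof p * (\<Prod>j = 0..<r. V j (g j) (p j))))"
    by (rule sum.swap)
  also have "\<dots> = (\<Sum>g\<in>PiE {0..<r} (\<lambda>_. U). (\<Prod>j = 0..<r. C j (g j)) * Determinant.det (mat r r (\<lambda>(i,j). V j (g j) i)))"
    by (simp add: det_transpose_form sum_distrib_left)
  finally show ?thesis .
qed

lemma det_scale_cols:
  "Determinant.det (mat r r (\<lambda>(i,j). f i j * s j)) = (\<Prod>j = 0..<r. s j) * Determinant.det (mat r r (\<lambda>(i,j). f i j))"
  by (simp add: det_transpose_form sum_distrib_left prod.distrib algebra_simps)

lemma det_scale_rows: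
  "Determinant.det (mat r r (\<lambda>(i,j). f i j * s i)) = (\<Prod>i = 0..<r. s i) * Determinant.det (mat r r (\<lambda>(i,j). f i j))"
proof -
  have *: "\<And>p. p permutes {0..<r} \<Longrightarrow> (\<Prod>j = 0..<r. s (p j)) = (\<Prod>i = 0..<r. s i)"
    by (rule prod.permute[symmetric, unfolded comp_def])
  show ?thesis
    by (simp add: det_transpose_form sum_distrib_left prod.distrib algebra_simps *)
qed

lemma vdm_Nil[simp]: "vdm [] = 1" by (simp add: vdm_def)

lemma vdm_Cons: "vdm (x # xs) = (\<Prod>j<length xs. xs ! j - x) * vdm xs"
proof -
  have "vdm (x # xs) = (\<Prod>j<Suc (length xs). \<Prod>i<j. (x#xs) ! j - (x#xs) ! i)"
    by (simp add: vdm_def)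
  also have "\<dots> = (\<Prod>j<length xs. \<Prod>i<Suc j. (x#xs) ! Suc j - (x#xs) ! i)"
    by (subst prod.lessThan_Suc_shift) simp
  also have "\<dots> = (\<Prod>j<length xs. (xs ! j - x) * (\<Prod>i<j. xs ! j - xs ! i))"
    by (intro prod.cong refl, subst prod.lessThan_Suc_shift) simp
  also have "\<dots> = (\<Prod>j<length xs. xs ! j - x) * vdm xs"
    by (simp add: prod.distrib vdm_def)
  finally show ?thesis .
qed

lemma ff_vdm: "Determinant.det (mat r r (\<lambda>(i,j). ff (e j) i)) = vdm (map e [0..<r])"
proof (induction r arbitrary: e)
  case 0
  then show ?case by (simp add: det_def)
next
  case (Suc r)
  define n where "n = Suc r"
  define A where "A = mat n n (\<lambda>(i,j). ff (e j) i)"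
  define L where "L = mat n n (\<lambda>(i,j). if i = j then 1 else if i = Suc j then -(e 0 - real j) else (0::real))"
  define M' where "M' = mat r r (\<lambda>(i,j). ff (e (Suc j)) i * (e (Suc j) - e 0))"
  have LA: "L * A = four_block_mat (mat 1 1 (\<lambda>_. 1)) (mat 1 r (\<lambda>_. 1)) (0\<^sub>m r 1) M'"
  proof (rule eq_matI)
    fix i j assume i: "i < dim_row (four_block_mat (mat 1 1 (\<lambda>_. 1)) (mat 1 r (\<lambda>_. 1)) (0\<^sub>m r 1) M')"
      and j: "j < dim_col (four_block_mat (mat 1 1 (\<lambda>_. 1)) (mat 1 r (\<lambda>_. 1)) (0\<^sub>m r 1) M')"
    have i': "i < n" and j': "j < n" using i j by (auto simp: M'_def n_def)
    have "(L * A) $$ (i, j) = (\<Sum>t = 0..<n. L $$ (i,t) * A $$ (t,j))"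
      using i' j' by (simp add: L_def A_def scalar_prod_def)
    also have "\<dots> = (\<Sum>t = 0..<n. (if t = i then ff (e j) i else 0) +
        (if 0 < i \<and> t = i - 1 then -(e 0 - real (i - 1)) * ff (e j) (i - 1) else 0))"
      using i' j' by (intro sum.cong refl) (auto simp: L_def A_def)
    also have "\<dots> = ff (e j) i + (if 0 < i then -(e 0 - real (i - 1)) * ff (e j) (i - 1) else 0)"
      using i' by (simp add: sum.distrib, linarith)
    also have "\<dots> = (if i = 0 then 1 else ff (e j) (i - 1) * (e j - e 0))"
    proof (cases i)
      case (Suc i0) then show ?thesis by (simp add: ff_Suc algebra_simps)
    qed simp
    also have "\<dots> = four_block_mat (mat 1 1 (\<lambda>_. 1)) (mat 1 r (\<lambda>_. 1)) (0\<^sub>m r 1) M' $$ (i, j)"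
      using i' j' by (cases j) (auto simp: M'_def n_def)
    finally show "(L * A) $$ (i, j) = four_block_mat (mat 1 1 (\<lambda>_. 1)) (mat 1 r (\<lambda>_. 1)) (0\<^sub>m r 1) M' $$ (i, j)" .
  qed (auto simp: L_def A_def M'_def n_def)
  have detL: "Determinant.det L = 1"
    by (subst det_lower_triangular[of n]) (auto simp: L_def prod_list_diag_prod)
  have "Determinant.det (L * A) = Determinant.det A"
  proof -
    have Lc: "L \<in> carrier_mat n n" by (simp add: L_def)
    have Ac: "A \<in> carrier_mat n n" by (simp add: A_def)
    show ?thesis using det_mult[OF Lc Ac] detL by simp
  qed
  hence "Determinant.det A = Determinant.det M'"
    unfolding LA by (subst (asm) det_four_block_mat_lower_left_zero[of _ 1 _ r])
       (auto simp: M'_def det_def)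
  also have "\<dots> = (\<Prod>j = 0..<r. e (Suc j) - e 0) * vdm (map (e \<circ> Suc) [0..<r])"
    unfolding M'_def using det_scale_cols[of r "\<lambda>i j. ff (e (Suc j)) i" "\<lambda>j. e (Suc j) - e 0"]
      Suc.IH[of "e \<circ> Suc"] by (simp add: comp_def)
  also have "\<dots> = vdm (map e [0..<Suc r])"
    by (simp add: map_upt_Suc vdm_Cons atLeast0LessThan comp_def del: upt_Suc)
  finally show ?case by (simp add: A_def n_def)
qed

lemma det_row_form:
  "Determinant.det (mat r r f) = (\<Sum>p | p permutes {0..<r}. signof p * (\<Prod>i = 0..<r. f (i, p i)))"
  unfolding det_def by (auto intro!: sum.cong prod.cong simp: permutes_in_image)

lemma mono_wronsk:
  fixes g :: "nat \<Rightarrow> nat" and x :: real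
  shows "Determinant.det (mat r r (\<lambda>(i,j). ff (real (g j)) i * x ^ (g j - i))) =
    vdm (map (\<lambda>j. real (g j)) [0..<r]) * x ^ ((\<Sum>j = 0..<r. g j) - (\<Sum>i = 0..<r. i))"
proof -
  have trm: "(\<Prod>i = 0..<r. ff (real (g (p i))) i * x ^ (g (p i) - i)) =
      (\<Prod>i = 0..<r. ff (real (g (p i))) i) * x ^ ((\<Sum>j = 0..<r. g j) - (\<Sum>i = 0..<r. i))"
    if p: "p permutes {0..<r}" for p
  proof (cases "\<exists>i<r. g (p i) < i")
    case True
    then obtain i where i: "i < r" "g (p i) < i" by blast
    have z1: "(\<Prod>i = 0..<r. ff (real (g (p i))) i) = 0"
      by (rule prod_zero) (auto intro!: bexI[of _ i] simp: ff_nat_zero i)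
    have z2: "(\<Prod>i = 0..<r. ff (real (g (p i))) i * x ^ (g (p i) - i)) = 0"
      by (rule prod_zero) (auto intro!: bexI[of _ i] simp: ff_nat_zero i)
    show ?thesis by (simp only: z1 z2 mult_zero_left)
  next
    case False
    have "(\<Prod>i = 0..<r. x ^ (g (p i) - i)) = x ^ (\<Sum>i = 0..<r. g (p i) - i)"
      by (simp add: power_sum)
    also have "(\<Sum>i = 0..<r. g (p i) - i) = (\<Sum>i = 0..<r. g (p i)) - (\<Sum>i = 0..<r. i)"
      by (rule sum_subtractf_nat) (use False in force)
    also have "(\<Sum>i = 0..<r. g (p i)) = (\<Sum>j = 0..<r. g j)"
      using sum.permute[OF p, of g] by (simp add: comp_def)
    finally show ?thesis by (simp add: prod.distrib)
  qed
  have "Determinant.det (mat r r (\<lambda>(i,j). ff (real (g j)) i * x ^ (g j - i))) =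
     (\<Sum>p | p permutes {0..<r}. signof p * ((\<Prod>i = 0..<r. ff (real (g (p i))) i) * x ^ ((\<Sum>j = 0..<r. g j) - (\<Sum>i = 0..<r. i))))"
    unfolding det_row_form by (intro sum.cong refl) (simp add: trm)
  also have "\<dots> = Determinant.det (mat r r (\<lambda>(i,j). ff (real (g j)) i)) * x ^ ((\<Sum>j = 0..<r. g j) - (\<Sum>i = 0..<r. i))"
    unfolding det_row_form by (simp add: sum_distrib_right mult.assoc)
  also have "Determinant.det (mat r r (\<lambda>(i,j). ff (real (g j)) i)) = vdm (map (\<lambda>j. real (g j)) [0..<r])"
    by (rule ff_vdm)
  finally show ?thesis .
qed

lemma powr_wronsk:
  fixes e :: "nat \<Rightarrow> real" and y :: real
  assumes y: "y > 0"
  shows "Determinant.det (mat r r (\<lambda>(i,j). ff (e j) i * y powr (e j - real i))) =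
    y powr ((\<Sum>j = 0..<r. e j) - (\<Sum>i = 0..<r. real i)) * vdm (map e [0..<r])"
proof -
  have "Determinant.det (mat r r (\<lambda>(i,j). ff (e j) i * y powr (e j - real i))) =
     Determinant.det (mat r r (\<lambda>(i,j). (ff (e j) i * y powr (e j)) * y powr (- real i)))"
    by (intro arg_cong[where f = Determinant.det] cong_mat refl) (auto simp: powr_add[symmetric])
  also have "\<dots> = (\<Prod>i = 0..<r. y powr (- real i)) * ((\<Prod>j = 0..<r. y powr (e j)) *
       Determinant.det (mat r r (\<lambda>(i,j). ff (e j) i)))"
    by (subst det_scale_rows[of r "\<lambda>i j. ff (e j) i * y powr (e j)" "\<lambda>i. y powr (- real i)"],
        subst det_scale_cols[of r "\<lambda>i j. ff (e j) i" "\<lambda>j. y powr (e j)"]) simp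
  also have "(\<Prod>i = 0..<r. y powr (- real i)) = y powr (- (\<Sum>i = 0..<r. real i))"
    using y by (simp add: powr_sum sum_negf[symmetric])
  also have "(\<Prod>j = 0..<r. y powr (e j)) = y powr (\<Sum>j = 0..<r. e j)"
    using y by (simp add: powr_sum)
  finally show ?thesis
    using y by (simp add: ff_vdm powr_add[symmetric] mult.assoc)
qed

lemma deriv_monosum_step:
  fixes c :: "nat \<Rightarrow> real"
  shows "((\<lambda>y. \<Sum>t\<in>T. c t * ff (real t) i * y ^ (t - i)) has_real_derivative
          (\<Sum>t\<in>T. c t * ff (real t) (Suc i) * y ^ (t - Suc i))) (at y)"
proof -
  have eq: "real (t - i) * y ^ (t - Suc i) * (c t * ff (real t) i) = c t * ff (real t) (Suc i) * y ^ (t - Suc i)" for t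
  proof (cases "i \<le> t")
    case True then show ?thesis by (simp add: ff_Suc of_nat_diff)
  next
    case False then show ?thesis by (simp add: ff_Suc ff_nat_zero)
  qed
  show ?thesis
    apply (rule derivative_eq_intros refl)+
    apply (intro sum.cong refl)
    subgoal for t using eq[of t] by simp
    done
qed
lemma deriv_monosum:
  fixes c :: "nat \<Rightarrow> real"
  shows "(deriv ^^ i) (\<lambda>y. \<Sum>t\<in>T. c t * y ^ t) = (\<lambda>y. \<Sum>t\<in>T. c t * ff (real t) i * y ^ (t - i))"
proof (induction i)
  case 0 then show ?case by simp
next
  case (Suc i)
  show ?case
    by (simp add: Suc, rule ext, rule DERIV_imp_deriv, rule deriv_monosum_step)
qed

lemma deriv_shiftpow:
  fixes c :: real
  shows "(deriv ^^ i) (\<lambda>y. (y - c) ^ n) = (\<lambda>y. ff (real n) i * (y - c) ^ (n - i))"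
proof (induction i)
  case 0 then show ?case by simp
next
  case (Suc i)
  have eq: "ff (real n) i * (real (n - i) * (y - c) ^ (n - Suc i)) = ff (real n) (Suc i) * (y - c) ^ (n - Suc i)" for y
  proof (cases "i \<le> n")
    case True then show ?thesis by (simp add: ff_Suc of_nat_diff)
  next
    case False then show ?thesis by (simp add: ff_Suc ff_nat_zero)
  qed
  have "((\<lambda>y. ff (real n) i * (y - c) ^ (n - i)) has_real_derivative ff (real n) (Suc i) * (y - c) ^ (n - Suc i)) (at y)" for y
    apply (rule derivative_eq_intros refl)+
    using eq[of y] by (simp add: mult_ac)
  then show ?case
    by (simp add: Suc, intro ext DERIV_imp_deriv)
qed

lemma pascal_sum:
  fixes h :: "nat \<Rightarrow> real"
  shows "(\<Sum>u\<le>Suc i. real (Suc i choose u) * h u) =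
     (\<Sum>u\<le>i. real (i choose u) * h u) + (\<Sum>u\<le>i. real (i choose u) * h (Suc u))"
proof -
  have "(\<Sum>u\<le>Suc i. real (Suc i choose u) * h u) = h 0 + (\<Sum>u\<le>i. real (Suc i choose Suc u) * h (Suc u))"
    by (subst sum.atMost_Suc_shift) simp
  also have "\<dots> = h 0 + (\<Sum>u\<le>i. real (i choose Suc u) * h (Suc u)) + (\<Sum>u\<le>i. real (i choose u) * h (Suc u))"
    by (simp add: sum.distrib algebra_simps)
  also have "h 0 + (\<Sum>u\<le>i. real (i choose Suc u) * h (Suc u)) = (\<Sum>u\<le>i. real (i choose u) * h u)"
  proof -
    have "(\<Sum>u\<le>i. real (i choose u) * h u) = (\<Sum>u\<le>Suc i. real (i choose u) * h u)"
      by simp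
    also have "\<dots> = h 0 + (\<Sum>u\<le>i. real (i choose Suc u) * h (Suc u))"
      by (subst sum.atMost_Suc_shift) simp
    finally show ?thesis by simp
  qed
  finally show ?thesis .
qed

lemma deriv_expsum:
  fixes d :: "nat \<Rightarrow> real"
  shows "(deriv ^^ i) (\<lambda>y. exp y * (\<Sum>t\<in>T. d t * y ^ t)) =
    (\<lambda>y. exp y * (\<Sum>u\<le>i. real (i choose u) * (\<Sum>t\<in>T. d t * ff (real t) u * y ^ (t - u))))"
proof (induction i)
  case 0 then show ?case by simp
next
  case (Suc i)
  define h where "h u y = (\<Sum>t\<in>T. d t * ff (real t) u * y ^ (t - u))" for u y
  have hd: "(h u has_real_derivative h (Suc u) y) (at y)" for u y
    unfolding h_def by (rule deriv_monosum_step)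
  have "((\<lambda>y. exp y * (\<Sum>u\<le>i. real (i choose u) * h u y)) has_real_derivative
      exp y * (\<Sum>u\<le>Suc i. real (Suc i choose u) * h u y)) (at y)" for y
    unfolding pascal_sum[of i "\<lambda>u. h u y"]
    apply (rule derivative_eq_intros hd refl)+
    by (simp add: algebra_simps sum.distrib sum_distrib_left)
  then show ?case
    using Suc by (simp add: h_def[symmetric], intro ext DERIV_imp_deriv)
qed

lemma deriv_powrsum:
  fixes c e :: "nat \<Rightarrow> real"
  assumes y: "y > 0"
  shows "(deriv ^^ i) (\<lambda>y. \<Sum>t\<in>T. c t * y powr e t) y = (\<Sum>t\<in>T. c t * ff (e t) i * y powr (e t - real i))"
  using y
proof (induction i arbitrary: y)
  case 0 then show ?case by simp
next
  case (Suc i)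
  have ev: "eventually (\<lambda>z. (deriv ^^ i) (\<lambda>y. \<Sum>t\<in>T. c t * y powr e t) z = (\<Sum>t\<in>T. c t * ff (e t) i * z powr (e t - real i))) (nhds y)"
    using eventually_nhds_in_open[of "{0<..}" y] Suc.prems
    by (auto elim!: eventually_mono intro: Suc.IH)
  have "((\<lambda>z. \<Sum>t\<in>T. c t * ff (e t) i * z powr (e t - real i)) has_real_derivative
        (\<Sum>t\<in>T. c t * ff (e t) (Suc i) * y powr (e t - real (Suc i)))) (at y)"
  proof -
    have d1: "((\<lambda>z. c t * ff (e t) i * z powr (e t - real i)) has_real_derivative
       c t * ff (e t) i * ((e t - real i) * y powr (e t - real i - 1))) (at y)" for t
      by (intro DERIV_cmult has_real_derivative_powr Suc.prems)
    have "((\<lambda>z. \<Sum>t\<in>T. c t * ff (e t) i * z powr (e t - real i)) has_real_derivative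
       (\<Sum>t\<in>T. c t * ff (e t) i * ((e t - real i) * y powr (e t - real i - 1)))) (at y)"
      by (rule DERIV_sum, rule d1)
    moreover have "(\<Sum>t\<in>T. c t * ff (e t) i * ((e t - real i) * y powr (e t - real i - 1))) =
        (\<Sum>t\<in>T. c t * ff (e t) (Suc i) * y powr (e t - real (Suc i)))"
      by (intro sum.cong refl) (simp add: ff_Suc algebra_simps diff_diff_add)
    ultimately show ?thesis by simp
  qed
  then show ?case
    by (simp, subst deriv_cong_ev[OF ev refl], intro DERIV_imp_deriv)
qed

lemma sum_distinct_ge: "finite (S::nat set) \<Longrightarrow> (\<Sum>i<card S. i) \<le> \<Sum>S"
proof (induction "card S" arbitrary: S)
  case 0 then show ?case by simp
next
  case (Suc n)
  then have ne: "S \<noteq> {}" by auto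
  define m where "m = Max S"
  have mS: "m \<in> S" using Suc.prems ne by (simp add: m_def)
  have c: "card (S - {m}) = n" using Suc.hyps(2) mS Suc.prems by simp
  have "S \<subseteq> {..m}" using Suc.prems by (auto simp: m_def)
  hence "card S \<le> Suc m" using card_mono[of "{..m}" S] by simp
  hence mn: "n \<le> m" using Suc.hyps(2) by simp
  have "(\<Sum>i<card S. i) = n + (\<Sum>i<n. i)" by (simp add: Suc.hyps(2)[symmetric])
  also have "\<dots> \<le> m + \<Sum>(S - {m})" using Suc.hyps(1)[of "S - {m}"] c Suc.prems mn by simp
  also have "\<dots> = \<Sum>S" using Suc.prems mS by (simp add: sum.remove)
  finally show ?case .
qed

lemma sum_distinct_eq:
  assumes S: "finite (S::nat set)" and eq: "\<Sum>S = (\<Sum>i<card S. i)"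
  shows "S = {..<card S}"
proof (rule ccontr)
  assume ne: "S \<noteq> {..<card S}"
  have "\<not> S \<subseteq> {..<card S}"
  proof
    assume "S \<subseteq> {..<card S}"
    then show False using card_subset_eq[of "{..<card S}" S] ne by simp
  qed
  then obtain s where s: "s \<in> S" "s \<ge> card S" by (meson lessThan_iff not_less subsetI)
  have "\<not> {..<card S} \<subseteq> S"
  proof
    assume "{..<card S} \<subseteq> S"
    then show False using card_subset_eq[OF S, of "{..<card S}"] ne by simp
  qed
  then obtain t where t: "t < card S" "t \<notin> S" by auto
  define S' where "S' = insert t (S - {s})"
  have cS': "card S' = card S" using s t S by (simp add: S'_def card_insert_if)
  have "\<Sum>S' + s = \<Sum>S + t" using s t S
    by (simp add: S'_def sum.remove)
  hence "\<Sum>S' < \<Sum>S" using s t by simp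
  moreover have "(\<Sum>i<card S'. i) \<le> \<Sum>S'" using S by (intro sum_distinct_ge) (simp add: S'_def)
  ultimately show False using eq cS' by simp
qed

lemma sum_inj_ge:
  assumes "finite A" "inj_on (g::_\<Rightarrow>nat) A"
  shows "(\<Sum>i<card A. i) \<le> sum g A"
proof -
  have "(\<Sum>i<card A. i) = (\<Sum>i<card (g ` A). i)" using assms by (simp add: card_image)
  also have "\<dots> \<le> \<Sum>(g ` A)" using assms by (intro sum_distinct_ge) simp
  also have "\<dots> = sum g A" using assms by (simp add: sum.reindex)
  finally show ?thesis .
qed

lemma sum_inj_eq_iff:
  assumes "finite A" "inj_on (g::_\<Rightarrow>nat) A"
  shows "sum g A = (\<Sum>i<card A. i) \<longleftrightarrow> (\<forall>j\<in>A. g j < card A)"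
proof
  assume eq: "sum g A = (\<Sum>i<card A. i)"
  have "\<Sum>(g ` A) = (\<Sum>i<card (g ` A). i)" using assms eq by (simp add: sum.reindex card_image)
  hence "g ` A = {..<card (g ` A)}" using assms by (intro sum_distinct_eq) auto
  then show "\<forall>j\<in>A. g j < card A" using assms by (auto simp: card_image)
next
  assume lt: "\<forall>j\<in>A. g j < card A"
  hence "g ` A \<subseteq> {..<card A}" by auto
  moreover have "card (g ` A) = card {..<card A}" using assms by (simp add: card_image)
  ultimately have "g ` A = {..<card A}" by (intro card_subset_eq) auto
  hence "sum g A = \<Sum>{..<card A}" using assms by (metis sum.reindex_cong)
  then show "sum g A = (\<Sum>i<card A. i)" by simp
qed

lemma vdm_nondistinct: "\<not> distinct xs \<Longrightarrow> vdm xs = 0"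
proof -
  assume "\<not> distinct xs"
  then obtain i j where ij: "i < j" "j < length xs" "xs ! i = xs ! j"
    by (metis distinct_conv_nth linorder_neqE_nat)
  have "(\<Prod>i'<j. xs ! j - xs ! i') = 0"
    by (rule prod_zero) (use ij in \<open>auto intro!: bexI[of _ i]\<close>)
  then show "vdm xs = 0" unfolding vdm_def
    by (intro prod_zero) (use ij in auto)
qed

lemma vdm_snoc: "vdm (xs @ [y]) = vdm xs * (\<Prod>i<length xs. y - xs ! i)"
  unfolding vdm_def by (simp add: nth_append)

lemma prod_lessThan_add: "(\<Prod>i<a + (b::nat). f i) = (\<Prod>i<a. f i) * (\<Prod>i<b. f (a + i)::'a::comm_monoid_mult)"
  by (induction b) (simp_all add: mult.assoc)

definition cross :: "real list \<Rightarrow> real list \<Rightarrow> real" where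
  "cross xs ys = (\<Prod>j<length ys. \<Prod>i<length xs. ys ! j - xs ! i)"

lemma vdm_append: "vdm (xs @ ys) = vdm xs * vdm ys * cross xs ys"
proof (induction ys rule: rev_induct)
  case Nil then show ?case by (simp add: cross_def)
next
  case (snoc y ys)
  have "vdm (xs @ ys @ [y]) = vdm (xs @ ys) * (\<Prod>i<length xs + length ys. y - (xs @ ys) ! i)"
    using vdm_snoc[of "xs @ ys" y] by simp
  also have "(\<Prod>i<length xs + length ys. y - (xs @ ys) ! i) = (\<Prod>i<length xs. y - xs ! i) * (\<Prod>i<length ys. y - ys ! i)"
    by (simp add: prod_lessThan_add nth_append)
  finally show ?case
    using snoc by (simp add: vdm_snoc cross_def nth_append mult_ac)
qed

lemma ev_nz: "eventually (\<lambda>a::real. a \<noteq> 0) at_infinity"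
  unfolding eventually_at_infinity by (rule exI[of _ 1]) auto

lemma lim_inv_const: "((\<lambda>a::real. c / a) \<longlongrightarrow> 0) at_infinity"
proof -
  have "((\<lambda>a::real. c * inverse a) \<longlongrightarrow> c * 0) at_infinity"
    by (intro tendsto_mult tendsto_const tendsto_inverse_0)
  then show ?thesis by (simp add: divide_inverse)
qed

lemma lim_gchoose:
  "((\<lambda>a::real. ((c + s * a) gchoose q) / a ^ q) \<longlongrightarrow> s ^ q / fact q) at_infinity"
proof -
  have ev: "eventually (\<lambda>a. ((c + s * a) gchoose q) / a ^ q = (\<Prod>i = 0..<q. (c - real i) / a + s) / fact q) at_infinity"
    using ev_nz
  proof (rule eventually_mono)
    fix a :: real assume a: "a \<noteq> 0"
    have "((c + s * a) gchoose q) / a ^ q = (\<Prod>i = 0..<q. c + s * a - real i) / (\<Prod>i = 0..<q. a) / fact q"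
      by (simp add: gbinomial_prod_rev)
    also have "(\<Prod>i = 0..<q. c + s * a - real i) / (\<Prod>i = 0..<q. a) = (\<Prod>i = 0..<q. (c + s * a - real i) / a)"
      by (rule prod_dividef[symmetric])
    also have "\<dots> = (\<Prod>i = 0..<q. (c - real i) / a + s)"
      using a by (intro prod.cong refl) (simp add: field_simps)
    finally show "((c + s * a) gchoose q) / a ^ q = (\<Prod>i = 0..<q. (c - real i) / a + s) / fact q" .
  qed
  have "((\<lambda>a. (\<Prod>i = 0..<q. (c - real i) / a + s) / fact q) \<longlongrightarrow> (\<Prod>i = 0..<q. 0 + s) / fact q) at_infinity"
    by (intro tendsto_divide tendsto_prod tendsto_add lim_inv_const tendsto_const) auto
  then show ?thesis using tendsto_cong[OF ev] by simp
qed

definition cf :: "real \<Rightarrow> nat \<Rightarrow> nat \<Rightarrow> real" where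
  "cf a n t = (if t \<le> n then (-1) ^ (n - t) * (fact n / fact t) * ((real n + a) gchoose (n - t)) else 0)"

lemma lag_hat_sum: "n \<le> M \<Longrightarrow> lag_hat a n y = (\<Sum>t\<le>M. cf a n t * y ^ t)"
  unfolding lag_hat_def cf_def
  by (rule sum.mono_neutral_cong_left) auto

lemma lim_cf:
  "((\<lambda>a::real. cf (s * a) n t * a ^ t / a ^ n) \<longlongrightarrow>
     (if t \<le> n then (-1) ^ (n - t) * s ^ (n - t) * real (n choose t) else 0)) at_infinity"
proof (cases "t \<le> n")
  case False then show ?thesis by (simp add: cf_def)
next
  case True
  have ev: "eventually (\<lambda>a. cf (s * a) n t * a ^ t / a ^ n =
      (-1) ^ (n - t) * (fact n / fact t) * (((real n + s * a) gchoose (n - t)) / a ^ (n - t))) at_infinity"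
    using ev_nz
  proof (rule eventually_mono)
    fix a :: real assume a: "a \<noteq> 0"
    have "a ^ n = a ^ t * a ^ (n - t)" using True by (simp add: power_add[symmetric])
    then show "cf (s * a) n t * a ^ t / a ^ n =
      (-1) ^ (n - t) * (fact n / fact t) * (((real n + s * a) gchoose (n - t)) / a ^ (n - t))"
      using a True by (simp add: cf_def)
  qed
  have "((\<lambda>a. (-1) ^ (n - t) * (fact n / fact t) * (((real n + s * a) gchoose (n - t)) / a ^ (n - t)))
      \<longlongrightarrow> (-1) ^ (n - t) * (fact n / fact t) * (s ^ (n - t) / fact (n - t))) at_infinity"
    by (intro tendsto_mult tendsto_const lim_gchoose)
  moreover have "(-1) ^ (n - t) * (fact n / fact t) * (s ^ (n - t) / fact (n - t)) =
      (-1) ^ (n - t) * s ^ (n - t) * real (n choose t)"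
    using True by (simp add: binomial_fact field_simps)
  ultimately show ?thesis using tendsto_cong[OF ev] True by simp
qed

lemma lim_ratio1: "((\<lambda>a::real. (c1 - a) / (c2 - a)) \<longlongrightarrow> 1) at_infinity"
proof -
  have ev: "eventually (\<lambda>a. (c1 - a) / (c2 - a) = (c1 / a - 1) / (c2 / a - 1)) at_infinity"
  proof (rule eventually_mono[OF ev_nz])
    fix a :: real assume a: "a \<noteq> 0"
    have "c1 / a - 1 = (c1 - a) / a" "c2 / a - 1 = (c2 - a) / a" using a by (simp_all add: field_simps)
    then show "(c1 - a) / (c2 - a) = (c1 / a - 1) / (c2 / a - 1)" using a by simp
  qed
  have "((\<lambda>a. (c1 / a - 1) / (c2 / a - 1)) \<longlongrightarrow> (0 - 1) / (0 - 1)) at_infinity"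
    by (intro tendsto_divide tendsto_diff lim_inv_const tendsto_const) auto
  then show ?thesis using tendsto_cong[OF ev] by simp
qed

lemma lim_pow_ratio:
  assumes "C \<le> m"
  shows "((\<lambda>a::real. a ^ C / a ^ m) \<longlongrightarrow> (if m = C then 1 else 0)) at_infinity"
proof (cases "m = C")
  case True
  then show ?thesis using ev_nz by (simp add: tendsto_cong[of _ "\<lambda>_. 1"] eventually_mono)
next
  case False
  then obtain d where d: "m = C + Suc d" using assms by (metis le_iff_add not0_implies_Suc add_0_right)
  have ev: "eventually (\<lambda>a::real. a ^ C / a ^ m = inverse a * inverse a ^ d) at_infinity"
    by (rule eventually_mono[OF ev_nz]) (simp add: d power_add field_simps)
  have "((\<lambda>a::real. inverse a * inverse a ^ d) \<longlongrightarrow> 0 * 0 ^ d) at_infinity"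
    by (intro tendsto_mult tendsto_power tendsto_inverse_0)
  then show ?thesis using tendsto_cong[OF ev] False by simp
qed

lemma shift_expand:
  assumes "n \<le> M"
  shows "(\<Sum>t\<le>M. (if t \<le> n then real (n choose t) * (- c) ^ (n - t) else 0) * ff (real t) u * x ^ (t - u)) =
     ff (real n) u * (x - c) ^ (n - u)"
proof -
  have f: "(\<lambda>y. (y - c) ^ n) = (\<lambda>y. \<Sum>t\<le>M. (if t \<le> n then real (n choose t) * (- c) ^ (n - t) else 0) * y ^ t)"
  proof
    fix y :: real
    have "(y - c) ^ n = (y + (- c)) ^ n" by simp
    also have "\<dots> = (\<Sum>t\<le>n. real (n choose t) * y ^ t * (- c) ^ (n - t))"
      by (rule binomial_ring)
    also have "\<dots> = (\<Sum>t\<le>M. (if t \<le> n then real (n choose t) * (- c) ^ (n - t) else 0) * y ^ t)"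
      using assms by (intro sum.mono_neutral_cong_left) auto
    finally show "(y - c) ^ n = \<dots>" .
  qed
  have "(deriv ^^ u) (\<lambda>y. (y - c) ^ n) x = ff (real n) u * (x - c) ^ (n - u)"
    by (simp add: deriv_shiftpow)
  then show ?thesis unfolding f deriv_monosum by simp
qed

lemma det_binom_block: "Determinant.det (mat l l (\<lambda>(i,u). real ((k + i) choose u))) = 1"
proof -
  define P where "P = mat l l (\<lambda>(i,t). real (i choose t))"
  define U where "U = mat l l (\<lambda>(t,u). if t \<le> u then real (k choose (u - t)) else 0)"
  have PU: "P * U = mat l l (\<lambda>(i,u). real ((k + i) choose u))"
  proof (rule eq_matI)
    fix i u assume i: "i < dim_row (mat l l (\<lambda>(i,u). real ((k + i) choose u)))"
      and u: "u < dim_col (mat l l (\<lambda>(i,u). real ((k + i) choose u)))"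
    have "(P * U) $$ (i,u) = (\<Sum>t = 0..<l. real (i choose t) * (if t \<le> u then real (k choose (u - t)) else 0))"
      using i u by (simp add: P_def U_def scalar_prod_def)
    also have "\<dots> = (\<Sum>t\<le>u. real (i choose t) * real (k choose (u - t)))"
      using u by (intro sum.mono_neutral_cong_right) auto
    also have "\<dots> = real ((i + k) choose u)"
    proof -
      have "(\<Sum>t\<le>u. (i choose t) * (k choose (u - t))) = (i + k) choose u" by (rule vandermonde)
      then show ?thesis by (simp only: of_nat_mult[symmetric] of_nat_sum[symmetric])
    qed
    finally show "(P * U) $$ (i,u) = mat l l (\<lambda>(i,u). real ((k + i) choose u)) $$ (i,u)"
      using i u by (simp add: add.commute)
  qed (auto simp: P_def U_def)
  have dP: "Determinant.det P = 1"
    by (subst det_lower_triangular[of l]) (auto simp: P_def prod_list_diag_prod)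
  have dU: "Determinant.det U = 1"
    by (subst det_upper_triangular[of _ l]) (auto simp: U_def prod_list_diag_prod upper_triangular_def)
  have "Determinant.det (P * U) = 1"
    by (subst det_mult[of _ l]) (auto simp: P_def U_def dP[unfolded P_def] dU[unfolded U_def])
  then show ?thesis using PU by simp
qed

lemma wr_det: "wronskian fs y = Determinant.det (mat (length fs) (length fs) (\<lambda>(i,j). (deriv ^^ i) (fs ! j) y))"
  unfolding wronskian_def det_row_form by (simp add: atLeast0LessThan)

lemma length_degvec[simp]: "length (degvec lam) = length lam"
  by (simp add: degvec_def)

definition Fd :: "nat \<Rightarrow> real \<Rightarrow> nat \<Rightarrow> nat \<Rightarrow> real \<Rightarrow> real" where
  "Fd M a n u y = (\<Sum>t\<le>M. cf a n t * ff (real t) u * y ^ (t - u))"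
definition Hd :: "nat \<Rightarrow> real \<Rightarrow> nat \<Rightarrow> nat \<Rightarrow> real \<Rightarrow> real" where
  "Hd M a m u y = (\<Sum>t\<le>M. ((-1) ^ t * cf a m t) * ff (real t) u * y ^ (t - u))"
definition C0 :: "nat \<Rightarrow> nat list \<Rightarrow> nat list \<Rightarrow> real \<Rightarrow> real \<Rightarrow> nat \<Rightarrow> nat \<Rightarrow> real" where
  "C0 M ns ms a y j u = (if j < length ns then Fd M a (ns ! j) u y else Hd M a (ms ! (j - length ns)) u y)"
definition Vv :: "nat \<Rightarrow> nat \<Rightarrow> nat \<Rightarrow> nat \<Rightarrow> real" where
  "Vv k j u i = (if j < k then (if i = u then 1 else 0) else real (i choose u))"
definition DV :: "nat \<Rightarrow> nat \<Rightarrow> (nat \<Rightarrow> nat) \<Rightarrow> real" where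
  "DV k r g = Determinant.det (mat r r (\<lambda>(i,j). Vv k j (g j) i))"

lemma deriv_lag: "n \<le> M \<Longrightarrow> (deriv ^^ i) (lag_hat a n) y = Fd M a n i y"
proof -
  assume n: "n \<le> M"
  have "lag_hat a n = (\<lambda>y. \<Sum>t\<le>M. cf a n t * y ^ t)"
    by (rule ext, rule lag_hat_sum[OF n])
  then show ?thesis by (simp add: deriv_monosum Fd_def)
qed

lemma deriv_elag: "m \<le> M \<Longrightarrow> (deriv ^^ i) (\<lambda>y. exp y * lag_hat a m (- y)) y =
   exp y * (\<Sum>u\<le>i. real (i choose u) * Hd M a m u y)"
proof -
  assume m: "m \<le> M"
  have "(\<lambda>y. exp y * lag_hat a m (- y)) = (\<lambda>y. exp y * (\<Sum>t\<le>M. ((-1) ^ t * cf a m t) * y ^ t))"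
  proof (rule ext)
    fix y :: real
    have "lag_hat a m (- y) = (\<Sum>t\<le>M. ((-1) ^ t * cf a m t) * y ^ t)"
      unfolding lag_hat_sum[OF m] by (intro sum.cong refl) (simp only: power_minus[of y] mult.assoc mult.left_commute)
    then show "exp y * lag_hat a m (- y) = exp y * (\<Sum>t\<le>M. ((-1) ^ t * cf a m t) * y ^ t)" by simp
  qed
  then show ?thesis by (simp add: deriv_expsum Hd_def)
qed

lemma prod_if_block: "(\<Prod>j = 0..<k + l. if j < k then (1::real) else e) = e ^ l"
proof -
  have "(\<Prod>j = 0..<k + l. if j < k then (1::real) else e) =
     (\<Prod>j = 0..<k. if j < k then (1::real) else e) * (\<Prod>j = k..<k + l. if j < k then (1::real) else e)"
    by (rule prod.atLeastLessThan_concat[symmetric]) auto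
  also have "(\<Prod>j = 0..<k. if j < k then (1::real) else e) = 1" by (intro prod.neutral) auto
  also have "(\<Prod>j = k..<k + l. if j < k then (1::real) else e) = (\<Prod>j = k..<k + l. e)" by (intro prod.cong) auto
  finally show ?thesis by simp
qed

lemma omega_sum:
  fixes mu nu :: "nat list" and a y :: real
  defines "ns \<equiv> degvec mu" and "ms \<equiv> degvec nu"
  defines "k \<equiv> length ns" and "l \<equiv> length ms"
  assumes M: "\<forall>n\<in>set ns. n \<le> M" "\<forall>m\<in>set ms. m \<le> M"
  shows "omega_mn a mu nu y = (-1) ^ sum_list ms / (vdm (map real ns) * vdm (map real ms)) *
     (\<Sum>g\<in>PiE {0..<k + l} (\<lambda>_. {..<k + l}). (\<Prod>j = 0..<k + l. C0 M ns ms a y j (g j)) * DV k (k + l) g)"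
proof -
  define r where "r = k + l"
  define fs where "fs = map (\<lambda>n. lag_hat a n) ns @ map (\<lambda>m. \<lambda>y. exp y * lag_hat a m (- y)) ms"
  define C where "C j u = (if j < k then (1::real) else exp y) * C0 M ns ms a y j u" for j u
  have lfs: "length fs = r" by (simp add: fs_def r_def k_def l_def)
  have entry: "(deriv ^^ i) (fs ! j) y = (\<Sum>u\<in>{..<r}. C j u * Vv k j u i)" if ij: "i < r" "j < r" for i j
  proof (cases "j < k")
    case True
    have "fs ! j = lag_hat a (ns ! j)" using True by (simp add: fs_def nth_append k_def)
    moreover have "ns ! j \<le> M" using M True by (simp add: k_def)
    ultimately have "(deriv ^^ i) (fs ! j) y = Fd M a (ns ! j) i y" by (simp add: deriv_lag)
    also have "\<dots> = C j i" using True by (simp add: C_def C0_def k_def)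
    also have "\<dots> = (\<Sum>u\<in>{..<r}. if u = i then C j i else 0)" using ij by simp
    also have "\<dots> = (\<Sum>u\<in>{..<r}. C j u * Vv k j u i)"
      using True by (intro sum.cong refl) (auto simp: Vv_def)
    finally show ?thesis .
  next
    case False
    have jl: "j - k < l" using False ij by (simp add: r_def)
    have "fs ! j = (\<lambda>y. exp y * lag_hat a (ms ! (j - k)) (- y))" using False jl by (simp add: fs_def nth_append k_def l_def)
    moreover have "ms ! (j - k) \<le> M" using M jl by (simp add: l_def)
    ultimately have "(deriv ^^ i) (fs ! j) y = exp y * (\<Sum>u\<le>i. real (i choose u) * Hd M a (ms ! (j - k)) u y)"
      by (simp add: deriv_elag)
    also have "\<dots> = exp y * (\<Sum>u\<in>{..<r}. real (i choose u) * Hd M a (ms ! (j - k)) u y)"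
      using ij by (intro arg_cong[where f = "\<lambda>z. exp y * z"] sum.mono_neutral_cong_left) auto
    also have "\<dots> = (\<Sum>u\<in>{..<r}. C j u * Vv k j u i)"
      using False by (simp add: C_def C0_def Vv_def k_def sum_distrib_left mult_ac)
    finally show ?thesis .
  qed
  have W: "wronskian fs y = (\<Sum>g\<in>PiE {0..<r} (\<lambda>_. {..<r}). (\<Prod>j = 0..<r. C j (g j)) * DV k r g)"
    unfolding wr_det lfs DV_def
    by (subst det_expand[symmetric], simp, intro arg_cong[where f = Determinant.det] cong_mat refl)
       (auto simp: entry)
  have P: "(\<Prod>j = 0..<r. C j (g j)) = exp y ^ l * (\<Prod>j = 0..<r. C0 M ns ms a y j (g j))" for g
    by (simp add: C_def prod.distrib r_def prod_if_block)
  have E: "exp (- (real l * y)) * exp y ^ l = 1"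
    by (simp add: exp_minus exp_of_nat_mult)
  have "omega_mn a mu nu y = (-1) ^ sum_list ms / (vdm (map real ns) * vdm (map real ms)) *
      (exp (- real l * y) * wronskian fs y)"
    unfolding omega_mn_def ns_def ms_def fs_def l_def length_degvec by (simp only: mult.assoc)
  also have "exp (- real l * y) * wronskian fs y =
      (\<Sum>g\<in>PiE {0..<r} (\<lambda>_. {..<r}). (\<Prod>j = 0..<r. C0 M ns ms a y j (g j)) * DV k r g)"
    unfolding W P by (simp add: sum_distrib_left mult.assoc[symmetric] E)
  finally show ?thesis by (simp only: r_def)
qed

lemma degvec_nth: "i < length lam \<Longrightarrow> degvec lam ! i = lam ! i + length lam - 1 - i"
  by (simp add: degvec_def)

lemma distinct_degvec:
  assumes "is_partition lam" shows "distinct (degvec lam)"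
proof -
  have lt: "degvec lam ! i > degvec lam ! j" if "i < j" "j < length lam" for i j
  proof -
    have "lam ! i \<ge> lam ! j" using assms that unfolding is_partition_def
      by (auto simp: sorted_wrt_iff_nth_less)
    then show ?thesis using that by (simp add: degvec_nth)
  qed
  show ?thesis unfolding distinct_conv_nth
  proof (intro allI impI)
    fix i j assume "i < length (degvec lam)" "j < length (degvec lam)" "i \<noteq> j"
    then show "degvec lam ! i \<noteq> degvec lam ! j"
      using lt[of i j] lt[of j i] by (cases "i < j") auto
  qed
qed

lemma sum_degvec: "sum_list (degvec lam) = psize lam + (\<Sum>i<length lam. i)"
proof -
  have "sum_list (degvec lam) = (\<Sum>i<length lam. lam ! i + (length lam - 1 - i))"
    by (simp add: degvec_def sum_list_sum_nth atLeast0LessThan)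
  also have "\<dots> = (\<Sum>i<length lam. lam ! i) + (\<Sum>i<length lam. length lam - Suc i)"
    by (subst sum.distrib[symmetric], intro sum.cong refl) auto
  also have "(\<Sum>i<length lam. length lam - Suc i) = (\<Sum>i<length lam. i)"
    using sum.nat_diff_reindex[of "\<lambda>i. i" "length lam"] by simp
  also have "(\<Sum>i<length lam. lam ! i) = psize lam"
    by (simp add: psize_def sum_list_sum_nth atLeast0LessThan)
  finally show ?thesis .
qed

lemma vdm_nz: assumes "distinct xs" shows "vdm xs \<noteq> 0"
proof -
  have "xs ! j - xs ! i \<noteq> 0" if "j < length xs" "i < j" for i j
    using that assms nth_eq_iff_index_eq[OF assms, of i j] by simp
  then show ?thesis unfolding vdm_def by (simp add: prod_zero_iff)
qed

lemma DV_zero: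
  assumes "k \<le> r" "\<not> (inj_on g {0..<k} \<and> inj_on g {k..<r})"
  shows "DV k r g = 0"
proof -
  have "\<exists>j1 j2. j1 \<noteq> j2 \<and> j1 < r \<and> j2 < r \<and> g j1 = g j2 \<and> (j1 < k \<longleftrightarrow> j2 < k)"
  proof (cases "inj_on g {0..<k}")
    case True
    then have "\<not> inj_on g {k..<r}" using assms by simp
    then obtain j1 j2 where "j1 \<in> {k..<r}" "j2 \<in> {k..<r}" "g j1 = g j2" "j1 \<noteq> j2"
      unfolding inj_on_def by blast
    then show ?thesis by (intro exI[of _ j1] exI[of _ j2]) auto
  next
    case False
    then obtain j1 j2 where "j1 \<in> {0..<k}" "j2 \<in> {0..<k}" "g j1 = g j2" "j1 \<noteq> j2"
      unfolding inj_on_def by blast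
    then show ?thesis using assms(1) by (intro exI[of _ j1] exI[of _ j2]) auto
  qed
  then obtain j1 j2 where j: "j1 \<noteq> j2" "j1 < r" "j2 < r" "g j1 = g j2" "j1 < k \<longleftrightarrow> j2 < k"
    by blast
  have VV: "Vv k j1 = Vv k j2" using j(5) by (simp add: Vv_def fun_eq_iff)
  have colEq: "col (mat r r (\<lambda>(i,j). Vv k j (g j) i)) j1 = col (mat r r (\<lambda>(i,j). Vv k j (g j) i)) j2"
    using j by (simp add: VV)
  show ?thesis unfolding DV_def
    apply (rule det_identical_columns[of _ r j1 j2])
    using j colEq by simp_all
qed

definition Lm :: "nat list \<Rightarrow> nat list \<Rightarrow> real \<Rightarrow> nat \<Rightarrow> nat \<Rightarrow> real" where
  "Lm ns ms x j u = (if j < length ns then ff (real (ns ! j)) u * (x - 1) ^ (ns ! j - u)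
     else (-1) ^ (ms ! (j - length ns)) * ff (real (ms ! (j - length ns))) u * (x + 1) ^ (ms ! (j - length ns) - u))"

lemma mono_wronsk_list:
  "Determinant.det (mat (length ns) (length ns) (\<lambda>(i,j). ff (real (ns ! j)) i * z ^ (ns ! j - i))) =
    vdm (map real ns) * z ^ (sum_list ns - (\<Sum>i<length ns. i))"
proof -
  have "map (\<lambda>j. real (ns ! j)) [0..<length ns] = map real ns"
    by (rule nth_equalityI) auto
  then show ?thesis using mono_wronsk[of "length ns" "\<lambda>j. ns ! j" z]
    by (simp add: sum_list_sum_nth atLeast0LessThan)
qed

lemma DV_eval:
  fixes ns ms :: "nat list" and x :: real
  defines "k \<equiv> length ns" and "l \<equiv> length ms"
  shows "(\<Sum>g\<in>PiE {0..<k + l} (\<lambda>_. {..<k + l}). (\<Prod>j = 0..<k + l. Lm ns ms x j (g j)) * DV k (k + l) g *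
            (if sum g {0..<k + l} = (\<Sum>i<k. i) + (\<Sum>i<l. i) then 1 else 0)) =
    vdm (map real ns) * (x - 1) ^ (sum_list ns - (\<Sum>i<k. i)) *
      ((-1) ^ sum_list ms * vdm (map real ms) * (x + 1) ^ (sum_list ms - (\<Sum>i<l. i)))"
proof -
  define r where "r = k + l"
  define bnd where "bnd j = (if j < k then k else l)" for j
  define Lm' where "Lm' j u = Lm ns ms x j u * (if u < bnd j then 1 else 0)" for j u
  have step1: "(\<Prod>j = 0..<r. Lm ns ms x j (g j)) * DV k r g *
            (if sum g {0..<r} = (\<Sum>i<k. i) + (\<Sum>i<l. i) then 1 else 0) =
        (\<Prod>j = 0..<r. Lm' j (g j)) * DV k r g" for g
  proof (cases "DV k r g = 0")
    case True then show ?thesis by simp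
  next
    case False
    hence inj: "inj_on g {0..<k}" "inj_on g {k..<r}" using DV_zero[of k r g] by (auto simp: r_def)
    have split: "sum g {0..<r} = sum g {0..<k} + sum g {k..<r}"
      by (simp add: r_def sum.atLeastLessThan_concat)
    have c1: "card {0..<k} = k" and c2: "card {k..<r} = l" by (auto simp: r_def)
    have ge1: "(\<Sum>i<k. i) \<le> sum g {0..<k}" using sum_inj_ge[of "{0..<k}" g] inj c1 by simp
    have ge2: "(\<Sum>i<l. i) \<le> sum g {k..<r}" using sum_inj_ge[of "{k..<r}" g] inj c2 by simp
    have iff1: "sum g {0..<k} = (\<Sum>i<k. i) \<longleftrightarrow> (\<forall>j\<in>{0..<k}. g j < k)"
      using sum_inj_eq_iff[of "{0..<k}" g] inj c1 by simp
    have iff2: "sum g {k..<r} = (\<Sum>i<l. i) \<longleftrightarrow> (\<forall>j\<in>{k..<r}. g j < l)"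
      using sum_inj_eq_iff[of "{k..<r}" g] inj c2 by simp
    have cond: "(sum g {0..<r} = (\<Sum>i<k. i) + (\<Sum>i<l. i)) \<longleftrightarrow> (\<forall>j\<in>{0..<r}. g j < bnd j)"
    proof -
      have "(sum g {0..<r} = (\<Sum>i<k. i) + (\<Sum>i<l. i)) \<longleftrightarrow>
          (sum g {0..<k} = (\<Sum>i<k. i) \<and> sum g {k..<r} = (\<Sum>i<l. i))"
        using split ge1 ge2 by linarith
      also have "\<dots> \<longleftrightarrow> (\<forall>j\<in>{0..<r}. g j < bnd j)"
        unfolding iff1 iff2 by (auto simp: bnd_def r_def)
      finally show ?thesis .
    qed
    have "(\<Prod>j = 0..<r. Lm' j (g j)) = (\<Prod>j = 0..<r. Lm ns ms x j (g j)) * (\<Prod>j = 0..<r. if g j < bnd j then 1 else (0::real))"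
      by (simp add: Lm'_def prod.distrib)
    also have "(\<Prod>j = 0..<r. if g j < bnd j then 1 else (0::real)) = (if \<forall>j\<in>{0..<r}. g j < bnd j then 1 else 0)"
      by auto
    finally show ?thesis using cond by simp
  qed
  have step2: "(\<Sum>g\<in>PiE {0..<r} (\<lambda>_. {..<r}). (\<Prod>j = 0..<r. Lm' j (g j)) * DV k r g) =
      Determinant.det (mat r r (\<lambda>(i,j). \<Sum>u\<in>{..<r}. Lm' j u * Vv k j u i))"
    unfolding DV_def by (rule det_expand[symmetric]) simp
  define A where "A = mat k k (\<lambda>(i,j). ff (real (ns ! j)) i * (x - 1) ^ (ns ! j - i))"
  define B where "B = mat k l (\<lambda>(i,j). \<Sum>u\<in>{..<r}. Lm' (k + j) u * real (i choose u))"
  define D where "D = mat l l (\<lambda>(i,j). \<Sum>u\<in>{..<r}. Lm' (k + j) u * real ((k + i) choose u))"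
  define Bb where "Bb = mat l l (\<lambda>(i,u). real ((k + i) choose u))"
  define E where "E = mat l l (\<lambda>(u,j). ff (real (ms ! j)) u * (x + 1) ^ (ms ! j - u) * (-1) ^ (ms ! j))"
  have blk: "mat r r (\<lambda>(i,j). \<Sum>u\<in>{..<r}. Lm' j u * Vv k j u i) = four_block_mat A B (0\<^sub>m l k) D"
  proof (rule eq_matI)
    fix i j assume i: "i < dim_row (four_block_mat A B (0\<^sub>m l k) D)" and j: "j < dim_col (four_block_mat A B (0\<^sub>m l k) D)"
    hence ir: "i < r" and jr: "j < r" by (auto simp: A_def D_def r_def)
    show "mat r r (\<lambda>(i,j). \<Sum>u\<in>{..<r}. Lm' j u * Vv k j u i) $$ (i, j) = four_block_mat A B (0\<^sub>m l k) D $$ (i, j)"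
    proof (cases "j < k")
      case True
      have "(\<Sum>u\<in>{..<r}. Lm' j u * Vv k j u i) = (\<Sum>u\<in>{..<r}. if u = i then Lm' j i else 0)"
        using True by (intro sum.cong refl) (auto simp: Vv_def)
      also have "\<dots> = Lm' j i" using ir by simp
      finally show ?thesis using True ir jr
        by (auto simp: A_def B_def D_def Lm'_def Lm_def bnd_def k_def r_def)
    next
      case False
      then show ?thesis using ir jr
        by (auto simp: A_def B_def D_def Vv_def r_def)
    qed
  qed (auto simp: A_def B_def D_def r_def)
  have detblk: "Determinant.det (four_block_mat A B (0\<^sub>m l k) D) = Determinant.det A * Determinant.det D"
    by (rule det_four_block_mat_lower_left_zero) (auto simp: A_def B_def D_def)
  have DBE: "D = Bb * E"
  proof (rule eq_matI)
    fix i j assume i: "i < dim_row (Bb * E)" and j: "j < dim_col (Bb * E)"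
    hence il: "i < l" and jl: "j < l" by (auto simp: Bb_def E_def)
    have "(Bb * E) $$ (i,j) = (\<Sum>u = 0..<l. real ((k + i) choose u) * (ff (real (ms ! j)) u * (x + 1) ^ (ms ! j - u) * (-1) ^ (ms ! j)))"
      using il jl by (simp add: Bb_def E_def scalar_prod_def)
    also have "\<dots> = (\<Sum>u\<in>{..<r}. Lm' (k + j) u * real ((k + i) choose u))"
      by (rule sum.mono_neutral_cong_left) (auto simp: r_def Lm'_def bnd_def Lm_def k_def mult_ac)
    finally show "D $$ (i,j) = (Bb * E) $$ (i,j)" using il jl by (simp add: D_def)
  qed (auto simp: D_def Bb_def E_def)
  have detD: "Determinant.det D = Determinant.det E"
  proof -
    have "Determinant.det (Bb * E) = Determinant.det Bb * Determinant.det E"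
      by (rule det_mult[of _ l]) (auto simp: Bb_def E_def)
    then show ?thesis using det_binom_block[of l k] by (simp add: DBE Bb_def)
  qed
  have detE: "Determinant.det E = (-1) ^ sum_list ms * (vdm (map real ms) * (x + 1) ^ (sum_list ms - (\<Sum>i<l. i)))"
  proof -
    have "Determinant.det E = (\<Prod>j = 0..<l. (-1) ^ (ms ! j)) * Determinant.det (mat l l (\<lambda>(i,j). ff (real (ms ! j)) i * (x + 1) ^ (ms ! j - i)))"
      unfolding E_def by (rule det_scale_cols)
    also have "(\<Prod>j = 0..<l. ((-1::real) ^ (ms ! j))) = (-1) ^ sum_list ms"
      by (simp add: power_sum[symmetric] sum_list_sum_nth l_def)
    finally show ?thesis using mono_wronsk_list[of ms "x + 1"] by (simp add: l_def)
  qed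
  have detA: "Determinant.det A = vdm (map real ns) * (x - 1) ^ (sum_list ns - (\<Sum>i<k. i))"
    using mono_wronsk_list[of ns "x - 1"] by (simp add: A_def k_def)
  have "(\<Sum>g\<in>PiE {0..<k + l} (\<lambda>_. {..<k + l}). (\<Prod>j = 0..<k + l. Lm ns ms x j (g j)) * DV k (k + l) g *
            (if sum g {0..<k + l} = (\<Sum>i<k. i) + (\<Sum>i<l. i) then 1 else 0)) =
      (\<Sum>g\<in>PiE {0..<r} (\<lambda>_. {..<r}). (\<Prod>j = 0..<r. Lm' j (g j)) * DV k r g)"
    unfolding r_def[symmetric] by (intro sum.cong refl step1)
  also have "\<dots> = Determinant.det A * Determinant.det D" unfolding step2 blk detblk ..
  finally show ?thesis unfolding detD detE detA by (simp add: mult_ac)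
qed

lemma sum_scale:
  fixes c :: "nat \<Rightarrow> real" and a x :: real
  assumes a: "a \<noteq> 0"
  shows "(\<Sum>t\<le>M. c t * ff (real t) u * (a * x) ^ (t - u)) * a ^ u / a ^ n =
         (\<Sum>t\<le>M. (c t * a ^ t / a ^ n) * ff (real t) u * x ^ (t - u))"
proof -
  have tw: "c t * ff (real t) u * (a * x) ^ (t - u) * a ^ u / a ^ n = (c t * a ^ t / a ^ n) * ff (real t) u * x ^ (t - u)" for t
  proof (cases "u \<le> t")
    case True
    have "(a * x) ^ (t - u) * a ^ u = a ^ t * x ^ (t - u)"
      using True by (simp add: power_mult_distrib power_add[symmetric])
    then show ?thesis by (simp add: field_simps)
  next
    case False then show ?thesis by (simp add: ff_nat_zero)
  qed
  have "(\<Sum>t\<le>M. c t * ff (real t) u * (a * x) ^ (t - u)) * a ^ u / a ^ n =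
      (\<Sum>t\<le>M. c t * ff (real t) u * (a * x) ^ (t - u) * a ^ u / a ^ n)"
    by (simp add: sum_distrib_right sum_divide_distrib)
  also have "\<dots> = (\<Sum>t\<le>M. (c t * a ^ t / a ^ n) * ff (real t) u * x ^ (t - u))"
    by (intro sum.cong refl tw)
  finally show ?thesis .
qed

lemma lim_Fd:
  assumes "n \<le> M"
  shows "((\<lambda>a. Fd M a n u (a * x) * a ^ u / a ^ n) \<longlongrightarrow> ff (real n) u * (x - 1) ^ (n - u)) at_infinity"
proof -
  have ev: "eventually (\<lambda>a. Fd M a n u (a * x) * a ^ u / a ^ n =
      (\<Sum>t\<le>M. (cf (1 * a) n t * a ^ t / a ^ n) * ff (real t) u * x ^ (t - u))) at_infinity"
    by (rule eventually_mono[OF ev_nz]) (simp add: Fd_def sum_scale)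
  have "((\<lambda>a. \<Sum>t\<le>M. (cf (1 * a) n t * a ^ t / a ^ n) * ff (real t) u * x ^ (t - u)) \<longlongrightarrow>
      (\<Sum>t\<le>M. (if t \<le> n then (-1) ^ (n - t) * 1 ^ (n - t) * real (n choose t) else 0) * ff (real t) u * x ^ (t - u))) at_infinity"
    by (intro tendsto_sum tendsto_mult tendsto_const lim_cf)
  also have "(\<Sum>t\<le>M. (if t \<le> n then (-1) ^ (n - t) * 1 ^ (n - t) * real (n choose t) else 0) * ff (real t) u * x ^ (t - u)) =
      (\<Sum>t\<le>M. (if t \<le> n then real (n choose t) * (- 1) ^ (n - t) else 0) * ff (real t) u * x ^ (t - u))"
    by (intro sum.cong refl) simp
  also have "\<dots> = ff (real n) u * (x - 1) ^ (n - u)" by (rule shift_expand[OF assms])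
  finally show ?thesis using tendsto_cong[OF ev] by simp
qed

lemma lim_Hd:
  assumes "m \<le> M"
  shows "((\<lambda>a. Hd M a m u (a * x) * a ^ u / a ^ m) \<longlongrightarrow> (-1) ^ m * (ff (real m) u * (x + 1) ^ (m - u))) at_infinity"
proof -
  have ev: "eventually (\<lambda>a. Hd M a m u (a * x) * a ^ u / a ^ m =
      (\<Sum>t\<le>M. ((-1) ^ t * (cf (1 * a) m t * a ^ t / a ^ m)) * ff (real t) u * x ^ (t - u))) at_infinity"
  proof (rule eventually_mono[OF ev_nz])
    fix a :: real assume a: "a \<noteq> 0"
    have "Hd M a m u (a * x) * a ^ u / a ^ m = (\<Sum>t\<le>M. ((-1) ^ t * cf a m t * a ^ t / a ^ m) * ff (real t) u * x ^ (t - u))"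
      unfolding Hd_def by (rule sum_scale[OF a])
    also have "\<dots> = (\<Sum>t\<le>M. ((-1) ^ t * (cf (1 * a) m t * a ^ t / a ^ m)) * ff (real t) u * x ^ (t - u))"
      by (simp add: mult.assoc)
    finally show "Hd M a m u (a * x) * a ^ u / a ^ m = (\<Sum>t\<le>M. ((-1) ^ t * (cf (1 * a) m t * a ^ t / a ^ m)) * ff (real t) u * x ^ (t - u))" .
  qed
  have "((\<lambda>a. \<Sum>t\<le>M. ((-1) ^ t * (cf (1 * a) m t * a ^ t / a ^ m)) * ff (real t) u * x ^ (t - u)) \<longlongrightarrow>
      (\<Sum>t\<le>M. ((-1) ^ t * (if t \<le> m then (-1) ^ (m - t) * 1 ^ (m - t) * real (m choose t) else 0)) * ff (real t) u * x ^ (t - u))) at_infinity"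
    by (intro tendsto_sum tendsto_mult tendsto_const lim_cf)
  also have "(\<Sum>t\<le>M. ((-1) ^ t * (if t \<le> m then (-1) ^ (m - t) * 1 ^ (m - t) * real (m choose t) else 0)) * ff (real t) u * x ^ (t - u)) =
      (-1) ^ m * (\<Sum>t\<le>M. (if t \<le> m then real (m choose t) * (- (-1)) ^ (m - t) else 0) * ff (real t) u * x ^ (t - u))"
  proof -
    have "((-1::real) ^ t * (if t \<le> m then (-1) ^ (m - t) * 1 ^ (m - t) * real (m choose t) else 0)) =
        (-1) ^ m * (if t \<le> m then real (m choose t) * (- (-1)) ^ (m - t) else 0)" for t
    proof (cases "t \<le> m")
      case True
      have "(-1::real) ^ t * (-1) ^ (m - t) = (-1) ^ m" using True by (simp add: power_add[symmetric])
      then show ?thesis using True by (simp add: mult.assoc[symmetric])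
    qed simp
    then show ?thesis by (simp add: sum_distrib_left mult.assoc)
  qed
  also have "(\<Sum>t\<le>M. (if t \<le> m then real (m choose t) * (- (-1)) ^ (m - t) else 0) * ff (real t) u * x ^ (t - u)) =
      ff (real m) u * (x - (-1)) ^ (m - u)" by (rule shift_expand[OF assms])
  finally show ?thesis using tendsto_cong[OF ev] by simp
qed

lemma lim_C0:
  assumes j: "j < length ns + length ms" and M: "\<forall>n\<in>set ns. n \<le> M" "\<forall>m\<in>set ms. m \<le> M"
  shows "((\<lambda>a. C0 M ns ms a (a * x) j u * a ^ u / a ^ ((ns @ ms) ! j)) \<longlongrightarrow> Lm ns ms x j u) at_infinity"
proof (cases "j < length ns")
  case True
  then have "ns ! j \<le> M" using M by simp
  from lim_Fd[OF this] show ?thesis using True by (simp add: C0_def Lm_def nth_append)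
next
  case False
  then have "ms ! (j - length ns) \<le> M" using M j by simp
  from lim_Hd[OF this] show ?thesis using False by (simp add: C0_def Lm_def nth_append mult.assoc)
qed

lemma member_le_sum_list_nat: "n \<in> set (xs::nat list) \<Longrightarrow> n \<le> sum_list xs"
  by (induction xs) auto

lemma omega_term_lim:
  fixes ns ms :: "nat list" and x :: real and g :: "nat \<Rightarrow> nat"
  defines "k \<equiv> length ns" and "l \<equiv> length ms"
  assumes M: "\<forall>n\<in>set ns. n \<le> M" "\<forall>m\<in>set ms. m \<le> M"
    and N: "sum_list ns + sum_list ms = N + ((\<Sum>i<k. i) + (\<Sum>i<l. i))"
  shows "((\<lambda>a. (\<Prod>j = 0..<k + l. C0 M ns ms a (a * x) j (g j)) * DV k (k + l) g / a ^ N) \<longlongrightarrow>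
     (\<Prod>j = 0..<k + l. Lm ns ms x j (g j)) * DV k (k + l) g *
            (if sum g {0..<k + l} = (\<Sum>i<k. i) + (\<Sum>i<l. i) then 1 else 0)) at_infinity"
proof (cases "DV k (k + l) g = 0")
  case True then show ?thesis by simp
next
  case False
  define r where "r = k + l"
  define KL where "KL = (\<Sum>i<k. i) + (\<Sum>i<l. i)"
  hence inj: "inj_on g {0..<k}" "inj_on g {k..<r}" using DV_zero[of k "k + l" g] False by (auto simp: r_def)
  have c1: "card {0..<k} = k" and c2: "card {k..<r} = l" by (auto simp: r_def)
  have "(\<Sum>i<k. i) \<le> sum g {0..<k}" using sum_inj_ge[of "{0..<k}" g] inj c1 by simp
  moreover have "(\<Sum>i<l. i) \<le> sum g {k..<r}" using sum_inj_ge[of "{k..<r}" g] inj c2 by simp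
  moreover have "sum g {0..<r} = sum g {0..<k} + sum g {k..<r}"
    by (simp add: r_def sum.atLeastLessThan_concat)
  ultimately have ge: "KL \<le> sum g {0..<r}" by (simp add: KL_def)
  have "(\<Sum>j = 0..<r. (ns @ ms) ! j) = sum_list (ns @ ms)"
    by (subst sum_list_sum_nth) (simp add: r_def k_def l_def)
  then have sd: "(\<Sum>j = 0..<r. (ns @ ms) ! j) = N + KL"
    using N by (simp add: KL_def)
  define cn where "cn a j = C0 M ns ms a (a * x) j (g j) * a ^ (g j) / a ^ ((ns @ ms) ! j)" for a j
  have ev: "eventually (\<lambda>a. (\<Prod>j = 0..<r. C0 M ns ms a (a * x) j (g j)) * DV k r g / a ^ N =
      (\<Prod>j = 0..<r. cn a j) * DV k r g * (a ^ KL / a ^ sum g {0..<r})) at_infinity"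
  proof (rule eventually_mono[OF ev_nz])
    fix a :: real assume a: "a \<noteq> 0"
    have "(\<Prod>j = 0..<r. cn a j) = (\<Prod>j = 0..<r. C0 M ns ms a (a * x) j (g j)) * a ^ sum g {0..<r} / a ^ (N + KL)"
      unfolding cn_def sd[symmetric] by (simp add: prod.distrib prod_dividef power_sum)
    then show "(\<Prod>j = 0..<r. C0 M ns ms a (a * x) j (g j)) * DV k r g / a ^ N =
      (\<Prod>j = 0..<r. cn a j) * DV k r g * (a ^ KL / a ^ sum g {0..<r})"
      using a by (simp add: power_add field_simps)
  qed
  have "((\<lambda>a. (\<Prod>j = 0..<r. cn a j) * DV k r g * (a ^ KL / a ^ sum g {0..<r})) \<longlongrightarrow>
      (\<Prod>j = 0..<r. Lm ns ms x j (g j)) * DV k r g * (if sum g {0..<r} = KL then 1 else 0)) at_infinity"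
    unfolding cn_def
    by (intro tendsto_mult tendsto_const tendsto_prod lim_pow_ratio[OF ge] lim_C0 M)
       (auto simp: r_def k_def l_def)
  then show ?thesis using tendsto_cong[OF ev] by (simp add: r_def KL_def)
qed

theorem omega_limit:
  assumes mu: "is_partition mu" and nu: "is_partition nu"
  shows "((\<lambda>a. omega_mn a mu nu (a * x) / a ^ (psize mu + psize nu)) \<longlongrightarrow>
     (x - 1) ^ psize mu * (x + 1) ^ psize nu) at_infinity"
proof -
  define ns where "ns = degvec mu"
  define ms where "ms = degvec nu"
  define k where "k = length ns"
  define l where "l = length ms"
  define M where "M = sum_list ns + sum_list ms"
  define N where "N = psize mu + psize nu"
  have M: "\<forall>n\<in>set ns. n \<le> M" "\<forall>m\<in>set ms. m \<le> M"
    using member_le_sum_list_nat by (fastforce simp: M_def)+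
  have sns: "sum_list ns = psize mu + (\<Sum>i<k. i)" by (simp add: ns_def k_def sum_degvec)
  have sms: "sum_list ms = psize nu + (\<Sum>i<l. i)" by (simp add: ms_def l_def sum_degvec)
  have NN: "sum_list ns + sum_list ms = N + ((\<Sum>i<k. i) + (\<Sum>i<l. i))" by (simp add: sns sms N_def)
  define \<kappa> where "\<kappa> = (-1) ^ sum_list ms / (vdm (map real ns) * vdm (map real ms))"
  have om: "omega_mn a mu nu (a * x) / a ^ N =
      \<kappa> * (\<Sum>g\<in>PiE {0..<k + l} (\<lambda>_. {..<k + l}). (\<Prod>j = 0..<k + l. C0 M ns ms a (a * x) j (g j)) * DV k (k + l) g / a ^ N)" for a
  proof -
    have om0: "omega_mn a mu nu (a * x) = \<kappa> * (\<Sum>g\<in>PiE {0..<k + l} (\<lambda>_. {..<k + l}). (\<Prod>j = 0..<k + l. C0 M ns ms a (a * x) j (g j)) * DV k (k + l) g)"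
      unfolding \<kappa>_def ns_def ms_def k_def l_def by (rule omega_sum) (use M in \<open>simp_all add: ns_def ms_def\<close>)
    show ?thesis by (simp only: om0 sum_divide_distrib[symmetric] times_divide_eq_right)
  qed
  have "((\<lambda>a. \<kappa> * (\<Sum>g\<in>PiE {0..<k + l} (\<lambda>_. {..<k + l}). (\<Prod>j = 0..<k + l. C0 M ns ms a (a * x) j (g j)) * DV k (k + l) g / a ^ N))
      \<longlongrightarrow> \<kappa> * (\<Sum>g\<in>PiE {0..<k + l} (\<lambda>_. {..<k + l}). (\<Prod>j = 0..<k + l. Lm ns ms x j (g j)) * DV k (k + l) g *
            (if sum g {0..<k + l} = (\<Sum>i<k. i) + (\<Sum>i<l. i) then 1 else 0))) at_infinity"
    by (intro tendsto_mult tendsto_const tendsto_sum omega_term_lim[OF M NN[unfolded k_def l_def], folded k_def l_def])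
  also have "\<kappa> * (\<Sum>g\<in>PiE {0..<k + l} (\<lambda>_. {..<k + l}). (\<Prod>j = 0..<k + l. Lm ns ms x j (g j)) * DV k (k + l) g *
            (if sum g {0..<k + l} = (\<Sum>i<k. i) + (\<Sum>i<l. i) then 1 else 0)) =
      \<kappa> * (vdm (map real ns) * (x - 1) ^ (sum_list ns - (\<Sum>i<k. i)) *
      ((-1) ^ sum_list ms * vdm (map real ms) * (x + 1) ^ (sum_list ms - (\<Sum>i<l. i))))"
    unfolding k_def l_def by (rule arg_cong[where f = "\<lambda>z. \<kappa> * z"], rule DV_eval)
  also have "\<dots> = (x - 1) ^ psize mu * (x + 1) ^ psize nu"
  proof -
    have "vdm (map real ns) \<noteq> 0" using distinct_degvec[OF mu]
      by (intro vdm_nz) (simp add: ns_def distinct_map)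
    moreover have "vdm (map real ms) \<noteq> 0" using distinct_degvec[OF nu]
      by (intro vdm_nz) (simp add: ms_def distinct_map)
    moreover have "((-1::real) ^ sum_list ms) * (-1) ^ sum_list ms = 1"
      by (simp add: power_add[symmetric])
    ultimately show ?thesis
      by (simp add: \<kappa>_def sns sms field_simps)
  qed
  finally have lim: "((\<lambda>a. \<kappa> * (\<Sum>g\<in>PiE {0..<k + l} (\<lambda>_. {..<k + l}). (\<Prod>j = 0..<k + l. C0 M ns ms a (a * x) j (g j)) * DV k (k + l) g / a ^ N))
      \<longlongrightarrow> (x - 1) ^ psize mu * (x + 1) ^ psize nu) at_infinity" .
  have feq: "(\<lambda>a. omega_mn a mu nu (a * x) / a ^ N) = (\<lambda>a. \<kappa> * (\<Sum>g\<in>PiE {0..<k + l} (\<lambda>_. {..<k + l}). (\<Prod>j = 0..<k + l. C0 M ns ms a (a * x) j (g j)) * DV k (k + l) g / a ^ N))"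
    by (rule ext, rule om)
  show ?thesis using lim unfolding N_def[symmetric] feq .
qed

definition El :: "nat \<Rightarrow> real \<Rightarrow> nat \<Rightarrow> nat \<Rightarrow> real" where
  "El k a j u = (if j < k then real u else real u - a)"
definition Cl :: "nat list \<Rightarrow> nat list \<Rightarrow> real \<Rightarrow> nat \<Rightarrow> nat \<Rightarrow> real" where
  "Cl ns ms a j u = (if j < length ns then cf a (ns ! j) u else cf (- a) (ms ! (j - length ns)) u)"

lemma sum_lessThan_add_nat: "(\<Sum>i<k + l. (i::nat)) = (\<Sum>i<k. i) + (\<Sum>i<l. i) + k * l"
  by (induction l) auto

lemma poly_eq_on_pos:
  fixes p q :: "real poly"
  assumes "\<forall>x>0. poly p x = poly q x"
  shows "p = q"
proof (rule ccontr)
  assume "p \<noteq> q"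
  hence "p - q \<noteq> 0" by simp
  hence "finite {x. poly (p - q) x = 0}" by (rule poly_roots_finite)
  moreover have "{0<..} \<subseteq> {x. poly (p - q) x = 0}" using assms by auto
  ultimately have "finite {0::real<..}" by (rule finite_subset[rotated])
  then show False using infinite_Ioi by blast
qed

lemma deriv_fs_lag:
  fixes a y :: real
  assumes y: "y > 0" and j: "j < length ns + length ms"
    and M: "\<forall>n\<in>set ns. n \<le> M" "\<forall>m\<in>set ms. m \<le> M"
  defines "fs \<equiv> map (\<lambda>n. lag_hat a n) ns @ map (\<lambda>m. \<lambda>y. y powr (- a) * lag_hat (- a) m y) ms"
  shows "(deriv ^^ i) (fs ! j) y = (\<Sum>u\<in>{..M}. Cl ns ms a j u * (ff (El (length ns) a j u) i * y powr (El (length ns) a j u - real i)))"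
proof -
  define g0 where "g0 = (\<lambda>z. \<Sum>u\<le>M. Cl ns ms a j u * z powr (El (length ns) a j u))"
  have eqpos: "(fs ! j) z = g0 z" if z: "z > 0" for z
  proof (cases "j < length ns")
    case True
    have n: "ns ! j \<le> M" using M True by simp
    have "(fs ! j) z = lag_hat a (ns ! j) z" using True by (simp add: fs_def nth_append)
    also have "\<dots> = (\<Sum>t\<le>M. cf a (ns ! j) t * z ^ t)" by (rule lag_hat_sum[OF n])
    also have "\<dots> = g0 z" using True z by (simp add: g0_def Cl_def El_def powr_realpow)
    finally show ?thesis .
  next
    case False
    have jl: "j - length ns < length ms" using False j by simp
    have m: "ms ! (j - length ns) \<le> M" using M jl by simp
    have "(fs ! j) z = z powr (- a) * lag_hat (- a) (ms ! (j - length ns)) z" using False jl by (simp add: fs_def nth_append)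
    also have "\<dots> = z powr (- a) * (\<Sum>t\<le>M. cf (- a) (ms ! (j - length ns)) t * z ^ t)" by (simp add: lag_hat_sum[OF m])
    also have "\<dots> = g0 z"
      unfolding g0_def sum_distrib_left
    proof (intro sum.cong refl)
      fix t assume "t \<in> {..M}"
      have "z powr (- a) * z ^ t = z powr (real t - a)"
        using z by (simp add: powr_realpow[symmetric] powr_add[symmetric])
      then show "z powr (- a) * (cf (- a) (ms ! (j - length ns)) t * z ^ t) = Cl ns ms a j t * z powr El (length ns) a j t"
        using False by (simp add: Cl_def El_def mult_ac)
    qed
    finally show ?thesis .
  qed
  have ev: "eventually (\<lambda>z. (fs ! j) z = g0 z) (nhds y)"
    using eventually_nhds_in_open[of "{0<..}" y] y by (auto elim!: eventually_mono intro: eqpos)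
  have "(deriv ^^ i) (fs ! j) y = (deriv ^^ i) g0 y" by (rule higher_deriv_cong_ev[OF ev refl])
  also have "\<dots> = (\<Sum>u\<in>{..M}. Cl ns ms a j u * ff (El (length ns) a j u) i * y powr (El (length ns) a j u - real i))"
    unfolding g0_def by (rule deriv_powrsum[OF y])
  finally show ?thesis by (simp add: mult.assoc)
qed

lemma wr_lag:
  fixes a y :: real
  assumes y: "y > 0"
    and M: "\<forall>n\<in>set ns. n \<le> M" "\<forall>m\<in>set ms. m \<le> M"
  defines "k \<equiv> length ns" and "l \<equiv> length ms"
  shows "wronskian (map (\<lambda>n. lag_hat a n) ns @ map (\<lambda>m. \<lambda>y. y powr (- a) * lag_hat (- a) m y) ms) y =
    (\<Sum>g\<in>PiE {0..<k + l} (\<lambda>_. {..M}). (\<Prod>j = 0..<k + l. Cl ns ms a j (g j)) *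
       (y powr ((\<Sum>j = 0..<k + l. El k a j (g j)) - (\<Sum>i = 0..<k + l. real i)) * vdm (map (\<lambda>j. El k a j (g j)) [0..<k + l])))"
proof -
  define fs where "fs = map (\<lambda>n. lag_hat a n) ns @ map (\<lambda>m. \<lambda>y. y powr (- a) * lag_hat (- a) m y) ms"
  have lfs: "length fs = k + l" by (simp add: fs_def k_def l_def)
  have "wronskian fs y = Determinant.det (mat (k + l) (k + l) (\<lambda>(i,j). \<Sum>u\<in>{..M}. Cl ns ms a j u * (ff (El k a j u) i * y powr (El k a j u - real i))))"
    unfolding wr_det lfs
    by (intro arg_cong[where f = Determinant.det] cong_mat refl)
       (auto simp: fs_def k_def l_def intro!: deriv_fs_lag[OF y _ M])
  also have "\<dots> = (\<Sum>g\<in>PiE {0..<k + l} (\<lambda>_. {..M}). (\<Prod>j = 0..<k + l. Cl ns ms a j (g j)) *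
       Determinant.det (mat (k + l) (k + l) (\<lambda>(i,j). ff (El k a j (g j)) i * y powr (El k a j (g j) - real i))))"
    by (rule det_expand) simp
  also have "\<dots> = (\<Sum>g\<in>PiE {0..<k + l} (\<lambda>_. {..M}). (\<Prod>j = 0..<k + l. Cl ns ms a j (g j)) *
       (y powr ((\<Sum>j = 0..<k + l. El k a j (g j)) - (\<Sum>i = 0..<k + l. real i)) * vdm (map (\<lambda>j. El k a j (g j)) [0..<k + l])))"
    by (intro sum.cong refl arg_cong[where f = "\<lambda>z. _ * z"]) (rule powr_wronsk[OF y])
  finally show ?thesis by (simp add: fs_def)
qed

definition Pl :: "nat \<Rightarrow> nat list \<Rightarrow> nat list \<Rightarrow> real \<Rightarrow> real poly" where
  "Pl M ns ms a = (\<Sum>g\<in>PiE {0..<length ns + length ms} (\<lambda>_. {..M}).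
     monom ((\<Prod>j = 0..<length ns + length ms. Cl ns ms a j (g j)) *
             vdm (map (\<lambda>j. El (length ns) a j (g j)) [0..<length ns + length ms]) /
             vdm (map real ns @ map (\<lambda>m. real m - a) ms))
       (sum g {0..<length ns + length ms} - ((\<Sum>i<length ns. i) + (\<Sum>i<length ms. i))))"

lemma El_inj:
  assumes "vdm (map (\<lambda>j. El k a j (g j)) [0..<k + l]) \<noteq> 0"
  shows "inj_on g {0..<k}" "inj_on g {k..<k + l}"
proof -
  have "distinct (map (\<lambda>j. El k a j (g j)) [0..<k + l])"
    using assms vdm_nondistinct by blast
  hence inj: "inj_on (\<lambda>j. El k a j (g j)) {0..<k + l}" by (simp add: distinct_map)
  show "inj_on g {0..<k}"
  proof (rule inj_onI)
    fix j1 j2 assume "j1 \<in> {0..<k}" "j2 \<in> {0..<k}" "g j1 = g j2"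
    then show "j1 = j2" using inj_onD[OF inj, of j1 j2] by (simp add: El_def)
  qed
  show "inj_on g {k..<k + l}"
  proof (rule inj_onI)
    fix j1 j2 assume "j1 \<in> {k..<k + l}" "j2 \<in> {k..<k + l}" "g j1 = g j2"
    then show "j1 = j2" using inj_onD[OF inj, of j1 j2] by (simp add: El_def)
  qed
qed

lemma El_sum: "(\<Sum>j = 0..<k + l. El k a j (g j)) = real (sum g {0..<k + l}) - a * real l"
proof -
  have "(\<Sum>j = 0..<k + l. El k a j (g j)) = (\<Sum>j = 0..<k. El k a j (g j)) + (\<Sum>j = k..<k + l. El k a j (g j))"
    by (rule sum.atLeastLessThan_concat[symmetric]) auto
  also have "(\<Sum>j = 0..<k. El k a j (g j)) = (\<Sum>j = 0..<k. real (g j))" by (intro sum.cong) (auto simp: El_def)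
  also have "(\<Sum>j = k..<k + l. El k a j (g j)) = (\<Sum>j = k..<k + l. real (g j) - a)" by (intro sum.cong) (auto simp: El_def)
  also have "\<dots> = (\<Sum>j = k..<k + l. real (g j)) - a * real l" by (simp add: sum_subtractf)
  also have "(\<Sum>j = 0..<k. real (g j)) + ((\<Sum>j = k..<k + l. real (g j)) - a * real l) =
      (\<Sum>j = 0..<k + l. real (g j)) - a * real l"
    by (simp add: sum.atLeastLessThan_concat)
  finally show ?thesis by simp
qed

lemma sum_El_ge:
  assumes "vdm (map (\<lambda>j. El k a j (g j)) [0..<k + l]) \<noteq> 0"
  shows "(\<Sum>i<k. i) + (\<Sum>i<l. i) \<le> sum g {0..<k + l}"
proof -
  have "(\<Sum>i<k. i) \<le> sum g {0..<k}" using sum_inj_ge[of "{0..<k}" g] El_inj(1)[OF assms] by simp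
  moreover have "(\<Sum>i<l. i) \<le> sum g {k..<k + l}" using sum_inj_ge[of "{k..<k + l}" g] El_inj(2)[OF assms] by simp
  moreover have "sum g {0..<k + l} = sum g {0..<k} + sum g {k..<k + l}"
    by (simp add: sum.atLeastLessThan_concat)
  ultimately show ?thesis by simp
qed

lemma lag_formula_poly:
  fixes a y :: real
  assumes y: "y > 0"
    and M: "\<forall>n\<in>set ns. n \<le> M" "\<forall>m\<in>set ms. m \<le> M"
  shows "y powr ((real (length ns) + a) * real (length ms)) / vdm (map real ns @ map (\<lambda>m. real m - a) ms) *
     wronskian (map (\<lambda>n. lag_hat a n) ns @ map (\<lambda>m. \<lambda>y. y powr (- a) * lag_hat (- a) m y) ms) y =
     poly (Pl M ns ms a) y"
proof -
  define k where "k = length ns"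
  define l where "l = length ms"
  define KL where "KL = (\<Sum>i<k. i) + (\<Sum>i<l. i)"
  define D0 where "D0 = vdm (map real ns @ map (\<lambda>m. real m - a) ms)"
  define V where "V g = vdm (map (\<lambda>j. El k a j (g j)) [0..<k + l])" for g
  define PC where "PC g = (\<Prod>j = 0..<k + l. Cl ns ms a j (g j))" for g
  have ex: "(real k + a) * real l + ((\<Sum>j = 0..<k + l. El k a j (g j)) - (\<Sum>i = 0..<k + l. real i)) =
      real (sum g {0..<k + l}) - real KL" for g
  proof -
    have "(\<Sum>i = 0..<k + l. real i) = real (\<Sum>i<k + l. i)" by (simp add: atLeast0LessThan)
    also have "\<dots> = real KL + real k * real l" by (simp add: sum_lessThan_add_nat KL_def)
    finally show ?thesis by (simp add: El_sum algebra_simps)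
  qed
  have tw: "y powr ((real k + a) * real l) / D0 * (PC g * (y powr ((\<Sum>j = 0..<k + l. El k a j (g j)) - (\<Sum>i = 0..<k + l. real i)) * V g)) =
      PC g * V g / D0 * y ^ (sum g {0..<k + l} - KL)" for g
  proof (cases "V g = 0")
    case True then show ?thesis by simp
  next
    case False
    hence ge: "KL \<le> sum g {0..<k + l}" using sum_El_ge[of k a g l] by (simp add: V_def KL_def)
    have "y powr ((real k + a) * real l) * y powr ((\<Sum>j = 0..<k + l. El k a j (g j)) - (\<Sum>i = 0..<k + l. real i)) =
        y powr (real (sum g {0..<k + l}) - real KL)" by (simp add: powr_add[symmetric] ex)
    also have "\<dots> = y ^ (sum g {0..<k + l} - KL)"
    proof -
      have e: "real (sum g {0..<k + l}) - real KL = real (sum g {0..<k + l} - KL)"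
        by (rule of_nat_diff[OF ge, symmetric])
      show ?thesis by (simp only: e powr_realpow[OF y])
    qed
    finally have "y powr ((real k + a) * real l) * y powr ((\<Sum>j = 0..<k + l. El k a j (g j)) - (\<Sum>i = 0..<k + l. real i)) = y ^ (sum g {0..<k + l} - KL)" .
    then show ?thesis by (simp add: field_simps)
  qed
  have "y powr ((real k + a) * real l) / D0 *
     wronskian (map (\<lambda>n. lag_hat a n) ns @ map (\<lambda>m. \<lambda>y. y powr (- a) * lag_hat (- a) m y) ms) y =
     (\<Sum>g\<in>PiE {0..<k + l} (\<lambda>_. {..M}). y powr ((real k + a) * real l) / D0 * (PC g * (y powr ((\<Sum>j = 0..<k + l. El k a j (g j)) - (\<Sum>i = 0..<k + l. real i)) * V g)))"
    unfolding wr_lag[OF y M] by (simp add: sum_distrib_left PC_def V_def k_def l_def)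
  also have "\<dots> = (\<Sum>g\<in>PiE {0..<k + l} (\<lambda>_. {..M}). PC g * V g / D0 * y ^ (sum g {0..<k + l} - KL))"
    by (intro sum.cong refl tw)
  also have "\<dots> = poly (Pl M ns ms a) y"
    by (simp add: Pl_def poly_sum poly_monom PC_def V_def D0_def KL_def k_def l_def)
  finally show ?thesis by (simp add: D0_def k_def l_def)
qed

lemma lag_generic_eq:
  fixes mu nu :: "nat list"
  assumes M: "\<forall>n\<in>set (degvec mu). n \<le> M" "\<forall>m\<in>set (degvec nu). m \<le> M"
  shows "lag_mn_generic a mu nu = Pl M (degvec mu) (degvec nu) a"
  unfolding lag_mn_generic_def
proof (rule the_equality)
  show "\<forall>x>0. poly (Pl M (degvec mu) (degvec nu) a) x =
     x powr ((real (length mu) + a) * real (length nu)) /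
     vdm (map real (degvec mu) @ map (\<lambda>m. real m - a) (degvec nu)) *
     wronskian (map (lag_hat a) (degvec mu) @ map (\<lambda>m y. y powr - a * lag_hat (- a) m y) (degvec nu)) x"
    using lag_formula_poly[OF _ M, of _ a] by simp
next
  fix p assume p: "\<forall>x>0. poly p x =
     x powr ((real (length mu) + a) * real (length nu)) /
     vdm (map real (degvec mu) @ map (\<lambda>m. real m - a) (degvec nu)) *
     wronskian (map (lag_hat a) (degvec mu) @ map (\<lambda>m y. y powr - a * lag_hat (- a) m y) (degvec nu)) x"
  show "p = Pl M (degvec mu) (degvec nu) a"
    by (rule poly_eq_on_pos) (use p lag_formula_poly[OF _ M, of _ a] in simp)
qed

lemma se1: "n \<le> M \<Longrightarrow> (\<Sum>t\<le>M. (if t \<le> n then real (n choose t) * (-1) ^ (n - t) else 0) * ff (real t) u * x ^ (t - u)) =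
   ff (real n) u * (x - 1) ^ (n - u)"
  using shift_expand[of n M 1 u x] by simp

lemma se2: "m \<le> M \<Longrightarrow> (\<Sum>t\<le>M. (if t \<le> m then real (m choose t) else 0) * ff (real t) u * x ^ (t - u)) =
   ff (real m) u * (x + 1) ^ (m - u)"
proof -
  assume m: "m \<le> M"
  have "(\<Sum>t\<le>M. (if t \<le> m then real (m choose t) else 0) * ff (real t) u * x ^ (t - u)) =
      (\<Sum>t\<le>M. (if t \<le> m then real (m choose t) * (- (-1)) ^ (m - t) else 0) * ff (real t) u * x ^ (t - u))"
    by (intro sum.cong refl) simp
  also have "\<dots> = ff (real m) u * (x - (-1)) ^ (m - u)" by (rule shift_expand[OF m])
  finally show ?thesis by simp
qed

definition Gm :: "nat list \<Rightarrow> nat list \<Rightarrow> nat \<Rightarrow> nat \<Rightarrow> real" where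
  "Gm ns ms j u = (if j < length ns then (if u \<le> ns ! j then real (ns ! j choose u) * (-1) ^ (ns ! j - u) else 0)
     else (if u \<le> ms ! (j - length ns) then real (ms ! (j - length ns) choose u) else 0))"

definition VB :: "nat \<Rightarrow> real \<Rightarrow> nat \<Rightarrow> nat \<Rightarrow> nat \<Rightarrow> real" where
  "VB k x j u i = (if j < k then (if i < k then ff (real u) i * x ^ (u - i) else 0)
     else (if k \<le> i then ff (real u) (i - k) * x ^ (u - (i - k)) else 0))"

lemma det_VB:
  "Determinant.det (mat (k + l) (k + l) (\<lambda>(i,j). VB k x j (g j) i)) =
   vdm (map (\<lambda>j. real (g j)) [0..<k]) * x ^ ((\<Sum>j = 0..<k. g j) - (\<Sum>i = 0..<k. i)) *
   (vdm (map (\<lambda>j. real (g (k + j))) [0..<l]) * x ^ ((\<Sum>j = 0..<l. g (k + j)) - (\<Sum>i = 0..<l. i)))"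
proof -
  define A where "A = mat k k (\<lambda>(i,j). ff (real (g j)) i * x ^ (g j - i))"
  define D where "D = mat l l (\<lambda>(i,j). ff (real (g (k + j))) i * x ^ (g (k + j) - i))"
  have eq: "mat (k + l) (k + l) (\<lambda>(i,j). VB k x j (g j) i) = four_block_mat A (0\<^sub>m k l) (0\<^sub>m l k) D"
    by (rule eq_matI) (auto simp: A_def D_def VB_def)
  have det4: "Determinant.det (four_block_mat A (0\<^sub>m k l) (0\<^sub>m l k) D) = Determinant.det A * Determinant.det D"
    by (rule det_four_block_mat_lower_left_zero) (auto simp: A_def D_def)
  have "Determinant.det (mat (k + l) (k + l) (\<lambda>(i,j). VB k x j (g j) i)) = Determinant.det A * Determinant.det D"
    unfolding eq by (rule det4)
  then show ?thesis by (simp add: A_def D_def mono_wronsk)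
qed

lemma lag_eval:
  fixes ns ms :: "nat list" and x :: real
  defines "k \<equiv> length ns" and "l \<equiv> length ms"
  assumes M: "\<forall>n\<in>set ns. n \<le> M" "\<forall>m\<in>set ms. m \<le> M"
  shows "(\<Sum>g\<in>PiE {0..<k + l} (\<lambda>_. {..M}). (\<Prod>j = 0..<k + l. Gm ns ms j (g j)) *
      (vdm (map (\<lambda>j. real (g j)) [0..<k]) * vdm (map (\<lambda>j. real (g j)) [k..<k + l])) *
      x ^ (sum g {0..<k + l} - ((\<Sum>i<k. i) + (\<Sum>i<l. i)))) =
    vdm (map real ns) * (x - 1) ^ (sum_list ns - (\<Sum>i<k. i)) * (vdm (map real ms) * (x + 1) ^ (sum_list ms - (\<Sum>i<l. i)))"
proof -
  have tw: "(vdm (map (\<lambda>j. real (g j)) [0..<k]) * vdm (map (\<lambda>j. real (g j)) [k..<k + l])) *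
      x ^ (sum g {0..<k + l} - ((\<Sum>i<k. i) + (\<Sum>i<l. i))) =
      Determinant.det (mat (k + l) (k + l) (\<lambda>(i,j). VB k x j (g j) i))" for g
  proof -
    have mh: "map (\<lambda>j. real (g j)) [k..<k + l] = map (\<lambda>j. real (g (k + j))) [0..<l]"
      by (rule nth_equalityI) auto
    have sh: "(\<Sum>j = k..<k + l. g j) = (\<Sum>j = 0..<l. g (k + j))"
      by (simp add: sum.shift_bounds_nat_ivl[symmetric] add.commute)
    show ?thesis
    proof (cases "vdm (map (\<lambda>j. real (g j)) [0..<k]) * vdm (map (\<lambda>j. real (g j)) [k..<k + l]) = 0")
      case True
      then show ?thesis unfolding det_VB mh by auto
    next
      case False
      have d1: "distinct (map (\<lambda>j. real (g j)) [0..<k])" using False vdm_nondistinct by auto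
      have d2: "distinct (map (\<lambda>j. real (g j)) [k..<k + l])" using False vdm_nondistinct by auto
      have i1: "inj_on g {0..<k}" using d1 by (auto simp: distinct_map inj_on_def)
      have i2: "inj_on g {k..<k + l}" using d2 by (auto simp: distinct_map inj_on_def)
      have g1: "(\<Sum>i<k. i) \<le> sum g {0..<k}" using sum_inj_ge[of "{0..<k}" g] i1 by simp
      have g2: "(\<Sum>i<l. i) \<le> sum g {k..<k + l}" using sum_inj_ge[of "{k..<k + l}" g] i2 by simp
      have spl: "sum g {0..<k + l} = sum g {0..<k} + sum g {k..<k + l}"
        by (simp add: sum.atLeastLessThan_concat)
      have "sum g {0..<k + l} - ((\<Sum>i<k. i) + (\<Sum>i<l. i)) = (sum g {0..<k} - (\<Sum>i<k. i)) + (sum g {k..<k + l} - (\<Sum>i<l. i))"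
        using g1 g2 spl by simp
      then show ?thesis unfolding det_VB mh[symmetric] sh[symmetric]
        by (simp add: power_add atLeast0LessThan mult_ac)
    qed
  qed
  have "(\<Sum>g\<in>PiE {0..<k + l} (\<lambda>_. {..M}). (\<Prod>j = 0..<k + l. Gm ns ms j (g j)) *
      (vdm (map (\<lambda>j. real (g j)) [0..<k]) * vdm (map (\<lambda>j. real (g j)) [k..<k + l])) *
      x ^ (sum g {0..<k + l} - ((\<Sum>i<k. i) + (\<Sum>i<l. i)))) =
      (\<Sum>g\<in>PiE {0..<k + l} (\<lambda>_. {..M}). (\<Prod>j = 0..<k + l. Gm ns ms j (g j)) *
        Determinant.det (mat (k + l) (k + l) (\<lambda>(i,j). VB k x j (g j) i)))"
    by (intro sum.cong refl) (simp add: tw[symmetric] mult.assoc)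
  also have "\<dots> = Determinant.det (mat (k + l) (k + l) (\<lambda>(i,j). \<Sum>u\<in>{..M}. Gm ns ms j u * VB k x j u i))"
    by (rule det_expand[symmetric]) simp
  also have "mat (k + l) (k + l) (\<lambda>(i,j). \<Sum>u\<in>{..M}. Gm ns ms j u * VB k x j u i) =
      four_block_mat (mat k k (\<lambda>(i,j). ff (real (ns ! j)) i * (x - 1) ^ (ns ! j - i))) (0\<^sub>m k l) (0\<^sub>m l k)
        (mat l l (\<lambda>(i,j). ff (real (ms ! j)) i * (x + 1) ^ (ms ! j - i)))"
  proof (rule eq_matI)
    fix i j assume i: "i < dim_row (four_block_mat (mat k k (\<lambda>(i,j). ff (real (ns ! j)) i * (x - 1) ^ (ns ! j - i))) (0\<^sub>m k l) (0\<^sub>m l k)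
        (mat l l (\<lambda>(i,j). ff (real (ms ! j)) i * (x + 1) ^ (ms ! j - i))))"
      and j: "j < dim_col (four_block_mat (mat k k (\<lambda>(i,j). ff (real (ns ! j)) i * (x - 1) ^ (ns ! j - i))) (0\<^sub>m k l) (0\<^sub>m l k)
        (mat l l (\<lambda>(i,j). ff (real (ms ! j)) i * (x + 1) ^ (ms ! j - i))))"
    hence ir: "i < k + l" and jr: "j < k + l" by auto
    show "mat (k + l) (k + l) (\<lambda>(i,j). \<Sum>u\<in>{..M}. Gm ns ms j u * VB k x j u i) $$ (i, j) = four_block_mat (mat k k (\<lambda>(i,j). ff (real (ns ! j)) i * (x - 1) ^ (ns ! j - i))) (0\<^sub>m k l) (0\<^sub>m l k)
        (mat l l (\<lambda>(i,j). ff (real (ms ! j)) i * (x + 1) ^ (ms ! j - i))) $$ (i, j)"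
    proof (cases "j < k")
      case True
      have nM: "ns ! j \<le> M" using M True by (simp add: k_def)
      show ?thesis
      proof (cases "i < k")
        case True
        have "(\<Sum>u\<in>{..M}. Gm ns ms j u * VB k x j u i) =
            (\<Sum>u\<le>M. (if u \<le> ns ! j then real (ns ! j choose u) * (-1) ^ (ns ! j - u) else 0) * ff (real u) i * x ^ (u - i))"
          using \<open>j < k\<close> True by (intro sum.cong refl) (simp add: Gm_def VB_def k_def)
        also have "\<dots> = ff (real (ns ! j)) i * (x - 1) ^ (ns ! j - i)" by (rule se1[OF nM])
        finally show ?thesis using \<open>j < k\<close> True ir jr by simp
      next
        case False
        then show ?thesis using \<open>j < k\<close> ir jr by (simp add: VB_def)
      qed
    next
      case False
      have jl: "j - k < l" using False jr by simp
      have mM: "ms ! (j - k) \<le> M" using M jl by (simp add: l_def)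
      show ?thesis
      proof (cases "i < k")
        case True
        then show ?thesis using False ir jr by (simp add: VB_def)
      next
        case False
        have "(\<Sum>u\<in>{..M}. Gm ns ms j u * VB k x j u i) =
            (\<Sum>u\<le>M. (if u \<le> ms ! (j - k) then real (ms ! (j - k) choose u) else 0) * ff (real u) (i - k) * x ^ (u - (i - k)))"
          using \<open>\<not> j < k\<close> False by (intro sum.cong refl) (simp add: Gm_def VB_def k_def)
        also have "\<dots> = ff (real (ms ! (j - k))) (i - k) * (x + 1) ^ (ms ! (j - k) - (i - k))" by (rule se2[OF mM])
        finally show ?thesis using \<open>\<not> j < k\<close> False ir jr by simp
      qed
    qed
  qed auto
  also have "Determinant.det (four_block_mat (mat k k (\<lambda>(i,j). ff (real (ns ! j)) i * (x - 1) ^ (ns ! j - i))) (0\<^sub>m k l) (0\<^sub>m l k)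
        (mat l l (\<lambda>(i,j). ff (real (ms ! j)) i * (x + 1) ^ (ms ! j - i)))) =
      Determinant.det (mat k k (\<lambda>(i,j). ff (real (ns ! j)) i * (x - 1) ^ (ns ! j - i))) *
      Determinant.det (mat l l (\<lambda>(i,j). ff (real (ms ! j)) i * (x + 1) ^ (ms ! j - i)))"
    by (rule det_four_block_mat_lower_left_zero) auto
  finally show ?thesis by (simp add: k_def l_def mono_wronsk_list)
qed

lemma vdm_shift: "vdm (map (\<lambda>z. z - a) xs) = vdm xs"
  unfolding vdm_def by simp

lemma El_split: "map (\<lambda>j. El k a j (g j)) [0..<k + l] =
   map (\<lambda>j. real (g j)) [0..<k] @ map (\<lambda>z. z - a) (map (\<lambda>j. real (g j)) [k..<k + l])"
  by (simp add: upt_add_eq_append[of 0 k l] El_def)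

lemma vdm_El: "vdm (map (\<lambda>j. El k a j (g j)) [0..<k + l]) =
   vdm (map (\<lambda>j. real (g j)) [0..<k]) * vdm (map (\<lambda>j. real (g j)) [k..<k + l]) *
   cross (map (\<lambda>j. real (g j)) [0..<k]) (map (\<lambda>z. z - a) (map (\<lambda>j. real (g j)) [k..<k + l]))"
  by (simp only: El_split vdm_append vdm_shift)

lemma vdm_D0: "vdm (map real ns @ map (\<lambda>m. real m - a) ms) =
   vdm (map real ns) * vdm (map real ms) * cross (map real ns) (map (\<lambda>z. z - a) (map real ms))"
proof -
  have "map (\<lambda>m. real m - a) ms = map (\<lambda>z. z - a) (map real ms)" by simp
  then show ?thesis by (simp only: vdm_append vdm_shift)
qed

lemma cross_ratio_lim:
  assumes "length xs = length xs'" "length ys = length ys'"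
  shows "((\<lambda>a. cross xs (map (\<lambda>z. z - a) ys) / cross xs' (map (\<lambda>z. z - a) ys')) \<longlongrightarrow> 1) at_infinity"
proof -
  have eq: "cross xs (map (\<lambda>z. z - a) ys) / cross xs' (map (\<lambda>z. z - a) ys') =
      (\<Prod>j<length ys. \<Prod>i<length xs. ((ys ! j - xs ! i) - a) / ((ys' ! j - xs' ! i) - a))" for a
    using assms by (simp add: cross_def prod_dividef algebra_simps)
  have "((\<lambda>a. \<Prod>j<length ys. \<Prod>i<length xs. ((ys ! j - xs ! i) - a) / ((ys' ! j - xs' ! i) - a)) \<longlongrightarrow>
      (\<Prod>j<length ys. \<Prod>i<length xs. (1::real))) at_infinity"
    by (intro tendsto_prod lim_ratio1)
  then show ?thesis unfolding eq by simp
qed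

lemma ev_generic:
  assumes mu: "is_partition mu" and nu: "is_partition nu"
  shows "eventually (\<lambda>a. lag_generic a mu nu) at_infinity"
proof -
  define M where "M = sum_list (degvec mu) + sum_list (degvec nu)"
  have Mn: "\<forall>n\<in>set (degvec mu). n \<le> M" "\<forall>m\<in>set (degvec nu). m \<le> M"
    using member_le_sum_list_nat by (fastforce simp: M_def)+
  show ?thesis unfolding eventually_at_infinity
  proof (intro exI[of _ "real M + 1"] allI impI)
    fix a :: real assume a: "real M + 1 \<le> norm a"
    have d1: "distinct (map real (degvec mu))" using distinct_degvec[OF mu] by (simp add: distinct_map)
    have d2: "distinct (map (\<lambda>m. real m - a) (degvec nu))" using distinct_degvec[OF nu]
      by (simp add: distinct_map inj_on_def)
    have disj: "set (map real (degvec mu)) \<inter> set (map (\<lambda>m. real m - a) (degvec nu)) = {}"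
    proof (rule ccontr)
      assume "set (map real (degvec mu)) \<inter> set (map (\<lambda>m. real m - a) (degvec nu)) \<noteq> {}"
      then obtain n m where nm: "n \<in> set (degvec mu)" "m \<in> set (degvec nu)" "real n = real m - a" by auto
      have "n \<le> M" "m \<le> M" using Mn nm by auto
      then have "\<bar>a\<bar> \<le> real M" using nm(3) by linarith
      then show False using a by simp
    qed
    show "lag_generic a mu nu" unfolding lag_generic_def using d1 d2 disj by simp
  qed
qed

lemma lim_Cl:
  assumes "j < length ns + length ms"
  shows "((\<lambda>a. Cl ns ms a j u * a ^ u / a ^ ((ns @ ms) ! j)) \<longlongrightarrow> Gm ns ms j u) at_infinity"
proof (cases "j < length ns")
  case True
  have "((\<lambda>a. cf (1 * a) (ns ! j) u * a ^ u / a ^ (ns ! j)) \<longlongrightarrow>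
      (if u \<le> ns ! j then (-1) ^ (ns ! j - u) * 1 ^ (ns ! j - u) * real (ns ! j choose u) else 0)) at_infinity"
    by (rule lim_cf)
  moreover have "(\<lambda>a. cf (1 * a) (ns ! j) u * a ^ u / a ^ (ns ! j)) = (\<lambda>a. Cl ns ms a j u * a ^ u / a ^ ((ns @ ms) ! j))"
    using True by (simp add: Cl_def nth_append)
  moreover have "(if u \<le> ns ! j then (-1) ^ (ns ! j - u) * 1 ^ (ns ! j - u) * real (ns ! j choose u) else 0) = Gm ns ms j u"
    using True by (simp add: Gm_def)
  ultimately show ?thesis by simp
next
  case False
  have "((\<lambda>a. cf (-1 * a) (ms ! (j - length ns)) u * a ^ u / a ^ (ms ! (j - length ns))) \<longlongrightarrow>
      (if u \<le> ms ! (j - length ns) then (-1) ^ (ms ! (j - length ns) - u) * (-1) ^ (ms ! (j - length ns) - u) * real (ms ! (j - length ns) choose u) else 0)) at_infinity"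
    by (rule lim_cf)
  moreover have "(-1::real) ^ (ms ! (j - length ns) - u) * (-1) ^ (ms ! (j - length ns) - u) = 1"
    by (simp add: power_mult_distrib[symmetric])
  moreover have "(\<lambda>a. cf (-1 * a) (ms ! (j - length ns)) u * a ^ u / a ^ (ms ! (j - length ns))) = (\<lambda>a. Cl ns ms a j u * a ^ u / a ^ ((ns @ ms) ! j))"
    using False by (simp add: Cl_def nth_append)
  ultimately have "((\<lambda>a. Cl ns ms a j u * a ^ u / a ^ ((ns @ ms) ! j)) \<longlongrightarrow>
      (if u \<le> ms ! (j - length ns) then real (ms ! (j - length ns) choose u) else 0)) at_infinity"
    by (simp add: if_distrib cong: if_cong)
  moreover have "(if u \<le> ms ! (j - length ns) then real (ms ! (j - length ns) choose u) else 0) = Gm ns ms j u"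
    using False by (simp add: Gm_def)
  ultimately show ?thesis by simp
qed

lemma lag_term_lim:
  fixes ns ms :: "nat list" and x :: real and g :: "nat \<Rightarrow> nat"
  defines "k \<equiv> length ns" and "l \<equiv> length ms"
  defines "KL \<equiv> (\<Sum>i<k. i) + (\<Sum>i<l. i)"
  assumes N: "sum_list ns + sum_list ms = N + KL"
    and nz: "vdm (map real ns) * vdm (map real ms) \<noteq> 0"
  shows "((\<lambda>a. poly (monom ((\<Prod>j = 0..<k + l. Cl ns ms a j (g j)) *
             vdm (map (\<lambda>j. El k a j (g j)) [0..<k + l]) /
             vdm (map real ns @ map (\<lambda>m. real m - a) ms)) (sum g {0..<k + l} - KL)) (a * x) / a ^ N)
     \<longlongrightarrow> (\<Prod>j = 0..<k + l. Gm ns ms j (g j)) *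
      (vdm (map (\<lambda>j. real (g j)) [0..<k]) * vdm (map (\<lambda>j. real (g j)) [k..<k + l])) *
      x ^ (sum g {0..<k + l} - KL) / (vdm (map real ns) * vdm (map real ms))) at_infinity"
proof -
  define Gf where "Gf = map (\<lambda>j. real (g j)) [0..<k]"
  define Gh where "Gh = map (\<lambda>j. real (g j)) [k..<k + l]"
  define S where "S = sum g {0..<k + l}"
  define cr where "cr a = cross Gf (map (\<lambda>z. z - a) Gh) / cross (map real ns) (map (\<lambda>z. z - a) (map real ms))" for a
  show ?thesis
  proof (cases "vdm Gf * vdm Gh = 0")
    case True
    have z: "vdm (map (\<lambda>j. El k a j (g j)) [0..<k + l]) = 0" for a
      unfolding vdm_El Gf_def[symmetric] Gh_def[symmetric] using True by simp
    show ?thesis unfolding Gf_def[symmetric] Gh_def[symmetric] by (simp add: z True)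
  next
    case False
    have d1: "distinct Gf" using False vdm_nondistinct by auto
    have d2: "distinct Gh" using False vdm_nondistinct by auto
    have i1: "inj_on g {0..<k}" using d1 by (auto simp: Gf_def distinct_map inj_on_def)
    have i2: "inj_on g {k..<k + l}" using d2 by (auto simp: Gh_def distinct_map inj_on_def)
    have "(\<Sum>i<k. i) \<le> sum g {0..<k}" using sum_inj_ge[of "{0..<k}" g] i1 by simp
    moreover have "(\<Sum>i<l. i) \<le> sum g {k..<k + l}" using sum_inj_ge[of "{k..<k + l}" g] i2 by simp
    moreover have "sum g {0..<k + l} = sum g {0..<k} + sum g {k..<k + l}"
      by (simp add: sum.atLeastLessThan_concat)
    ultimately have ge: "KL \<le> S" by (simp add: KL_def S_def)
    have sd: "(\<Sum>j = 0..<k + l. (ns @ ms) ! j) = N + KL"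
    proof -
      have "(\<Sum>j = 0..<k + l. (ns @ ms) ! j) = sum_list (ns @ ms)"
        by (subst sum_list_sum_nth) (simp add: k_def l_def)
      then show ?thesis using N by simp
    qed
    define cn where "cn a j = Cl ns ms a j (g j) * a ^ (g j) / a ^ ((ns @ ms) ! j)" for a j
    have ev: "eventually (\<lambda>a. poly (monom ((\<Prod>j = 0..<k + l. Cl ns ms a j (g j)) *
             vdm (map (\<lambda>j. El k a j (g j)) [0..<k + l]) /
             vdm (map real ns @ map (\<lambda>m. real m - a) ms)) (sum g {0..<k + l} - KL)) (a * x) / a ^ N =
        (\<Prod>j = 0..<k + l. cn a j) * (vdm Gf * vdm Gh) * cr a * x ^ (S - KL) / (vdm (map real ns) * vdm (map real ms))) at_infinity"
    proof (rule eventually_mono[OF ev_nz])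
      fix a :: real assume a: "a \<noteq> 0"
      have pc: "(\<Prod>j = 0..<k + l. cn a j) = (\<Prod>j = 0..<k + l. Cl ns ms a j (g j)) * a ^ S / a ^ (N + KL)"
        unfolding cn_def sd[symmetric] S_def by (simp add: prod.distrib prod_dividef power_sum)
      have SK: "a ^ S = a ^ (S - KL) * a ^ KL" using ge by (simp add: power_add[symmetric])
      have hA: "a ^ S / a ^ (N + KL) = a ^ (S - KL) / a ^ N"
        using a by (simp add: SK power_add)
      have pc2: "(\<Prod>j = 0..<k + l. cn a j) = (\<Prod>j = 0..<k + l. Cl ns ms a j (g j)) * (a ^ (S - KL) / a ^ N)"
        unfolding pc hA[symmetric] by simp
      show "poly (monom ((\<Prod>j = 0..<k + l. Cl ns ms a j (g j)) *
             vdm (map (\<lambda>j. El k a j (g j)) [0..<k + l]) /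
             vdm (map real ns @ map (\<lambda>m. real m - a) ms)) (sum g {0..<k + l} - KL)) (a * x) / a ^ N =
        (\<Prod>j = 0..<k + l. cn a j) * (vdm Gf * vdm Gh) * cr a * x ^ (S - KL) / (vdm (map real ns) * vdm (map real ms))"
        unfolding poly_monom pc2 vdm_El vdm_D0 cr_def Gf_def[symmetric] Gh_def[symmetric] S_def[symmetric]
        by (simp add: divide_inverse inverse_mult_distrib power_mult_distrib mult_ac)
    qed
    have "((\<lambda>a. (\<Prod>j = 0..<k + l. cn a j) * (vdm Gf * vdm Gh) * cr a * x ^ (S - KL) / (vdm (map real ns) * vdm (map real ms)))
      \<longlongrightarrow> (\<Prod>j = 0..<k + l. Gm ns ms j (g j)) * (vdm Gf * vdm Gh) * 1 * x ^ (S - KL) / (vdm (map real ns) * vdm (map real ms))) at_infinity"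
      unfolding cn_def cr_def
      by (intro tendsto_divide tendsto_mult tendsto_const tendsto_prod lim_Cl cross_ratio_lim)
         (use nz in \<open>auto simp: Gf_def Gh_def k_def l_def\<close>)
    then show ?thesis using tendsto_cong[OF ev] by (simp add: Gf_def Gh_def S_def)
  qed
qed

theorem lag_limit:
  assumes mu: "is_partition mu" and nu: "is_partition nu"
  shows "((\<lambda>a. poly (lag_mn a mu nu) (a * x) / a ^ (psize mu + psize nu)) \<longlongrightarrow>
     (x - 1) ^ psize mu * (x + 1) ^ psize nu) at_infinity"
proof -
  define ns where "ns = degvec mu"
  define ms where "ms = degvec nu"
  define k where "k = length ns"
  define l where "l = length ms"
  define KL where "KL = (\<Sum>i<k. i) + (\<Sum>i<l. i)"
  define M where "M = sum_list ns + sum_list ms"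
  define N where "N = psize mu + psize nu"
  have M: "\<forall>n\<in>set ns. n \<le> M" "\<forall>m\<in>set ms. m \<le> M"
    using member_le_sum_list_nat by (fastforce simp: M_def)+
  have sns: "sum_list ns = psize mu + (\<Sum>i<k. i)" by (simp add: ns_def k_def sum_degvec)
  have sms: "sum_list ms = psize nu + (\<Sum>i<l. i)" by (simp add: ms_def l_def sum_degvec)
  have NN: "sum_list ns + sum_list ms = N + KL" by (simp add: sns sms N_def KL_def)
  have nz1: "vdm (map real ns) \<noteq> 0" using distinct_degvec[OF mu]
    by (intro vdm_nz) (simp add: ns_def distinct_map)
  have nz2: "vdm (map real ms) \<noteq> 0" using distinct_degvec[OF nu]
    by (intro vdm_nz) (simp add: ms_def distinct_map)
  define T where "T a g = poly (monom ((\<Prod>j = 0..<k + l. Cl ns ms a j (g j)) *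
             vdm (map (\<lambda>j. El k a j (g j)) [0..<k + l]) /
             vdm (map real ns @ map (\<lambda>m. real m - a) ms)) (sum g {0..<k + l} - KL)) (a * x) / a ^ N" for a g
  have ev: "eventually (\<lambda>a. poly (lag_mn a mu nu) (a * x) / a ^ N = (\<Sum>g\<in>PiE {0..<k + l} (\<lambda>_. {..M}). T a g)) at_infinity"
    using ev_generic[OF mu nu]
  proof (rule eventually_mono)
    fix a assume gen: "lag_generic a mu nu"
    have "lag_mn a mu nu = Pl M ns ms a"
      using gen lag_generic_eq[of mu M nu a] M by (simp add: lag_mn_def ns_def ms_def)
    then show "poly (lag_mn a mu nu) (a * x) / a ^ N = (\<Sum>g\<in>PiE {0..<k + l} (\<lambda>_. {..M}). T a g)"
      by (simp add: Pl_def poly_sum sum_divide_distrib T_def k_def l_def KL_def)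
  qed
  have "((\<lambda>a. \<Sum>g\<in>PiE {0..<k + l} (\<lambda>_. {..M}). T a g) \<longlongrightarrow>
      (\<Sum>g\<in>PiE {0..<k + l} (\<lambda>_. {..M}). (\<Prod>j = 0..<k + l. Gm ns ms j (g j)) *
      (vdm (map (\<lambda>j. real (g j)) [0..<k]) * vdm (map (\<lambda>j. real (g j)) [k..<k + l])) *
      x ^ (sum g {0..<k + l} - KL) / (vdm (map real ns) * vdm (map real ms)))) at_infinity"
    unfolding T_def k_def l_def KL_def
    by (intro tendsto_sum lag_term_lim) (use NN nz1 nz2 in \<open>simp_all add: k_def l_def KL_def\<close>)
  also have "(\<Sum>g\<in>PiE {0..<k + l} (\<lambda>_. {..M}). (\<Prod>j = 0..<k + l. Gm ns ms j (g j)) *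
      (vdm (map (\<lambda>j. real (g j)) [0..<k]) * vdm (map (\<lambda>j. real (g j)) [k..<k + l])) *
      x ^ (sum g {0..<k + l} - KL) / (vdm (map real ns) * vdm (map real ms))) =
      vdm (map real ns) * (x - 1) ^ (sum_list ns - (\<Sum>i<k. i)) * (vdm (map real ms) * (x + 1) ^ (sum_list ms - (\<Sum>i<l. i)))
      / (vdm (map real ns) * vdm (map real ms))"
    unfolding sum_divide_distrib[symmetric] KL_def k_def l_def by (subst lag_eval[OF M]) (rule refl)
  also have "\<dots> = (x - 1) ^ psize mu * (x + 1) ^ psize nu"
    using nz1 nz2 by (simp add: sns sms field_simps)
  finally show ?thesis using tendsto_cong[OF ev] by (simp add: N_def)
qed

theorem proposition6p3:
  fixes mu nu :: "nat list" and x :: real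
  assumes "is_partition mu" and "is_partition nu"
  shows "((\<lambda>a. poly (lag_mn a mu nu) (a * x) / a ^ (psize mu + psize nu))
            \<longlongrightarrow> (x - 1) ^ psize mu * (x + 1) ^ psize nu) at_top \<and>
         ((\<lambda>a. poly (lag_mn a mu nu) (a * x) / a ^ (psize mu + psize nu))
            \<longlongrightarrow> (x - 1) ^ psize mu * (x + 1) ^ psize nu) at_bot \<and>
         ((\<lambda>a. omega_mn a mu nu (a * x) / a ^ (psize mu + psize nu))
            \<longlongrightarrow> (x - 1) ^ psize mu * (x + 1) ^ psize nu) at_top \<and>
         ((\<lambda>a. omega_mn a mu nu (a * x) / a ^ (psize mu + psize nu))
            \<longlongrightarrow> (x - 1) ^ psize mu * (x + 1) ^ psize nu) at_bot"
proof -
  have L: "((\<lambda>a. poly (lag_mn a mu nu) (a * x) / a ^ (psize mu + psize nu))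
            \<longlongrightarrow> (x - 1) ^ psize mu * (x + 1) ^ psize nu) at_infinity"
    by (rule lag_limit) (use assms in auto)
  have O: "((\<lambda>a. omega_mn a mu nu (a * x) / a ^ (psize mu + psize nu))
            \<longlongrightarrow> (x - 1) ^ psize mu * (x + 1) ^ psize nu) at_infinity"
    by (rule omega_limit) (use assms in auto)
  show ?thesis
    using tendsto_mono[OF at_top_le_at_infinity L] tendsto_mono[OF at_bot_le_at_infinity L]
      tendsto_mono[OF at_top_le_at_infinity O] tendsto_mono[OF at_bot_le_at_infinity O]
    by blast
qed

end
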